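(* Let $Q\in\mathbb{H}_{\mathbb{F}}$. Suppose that: (i) $L\in C^1(\mathbb{R}^2;\mathbb{R}^+\cup\{0\})$ is convex in $(x,v)$; (ii) $\Psi\in C^1(\mathbb{R};\mathbb{R}^+\cup\{0\})$ is convex; (iii) for some $C,\tilde C>0$, $\Psi(x)\leqslant C(1+|x|^2)$ and $|\Psi'(x)|\leqslant\tilde C(1+|x|)$ for all $x$; (iv) there exist $\tilde\beta,C>0$ with $L(x,v)\leqslant\tilde\beta(1+|v|^2)$ and $|L_x(x,v)|,|L_v(x,v)|\leqslant C(1+|v|)$ for all $(x,v)$; (v) for some $\alpha>0,\beta\geqslant0$, $\alpha|v|^2-\beta\leqslant L(x,v)$ for all $x,v$. Given an initial condition ${\bf x}_0\in\mathbb{R}^N$, there exists an optimal control ${\bf v}^*\in\mathbb{H}_{\mathbb{F}}^N$ attaining $\inf_{{\bf v}\in\mathbb{H}_{\mathbb{F}}^N}\frac1N\sum_{i=1}^N\mathbb{E}\left[\int_0^TL(X^i_t,v^i_t)dt+\Psi(X^i_T)\right]$ subject to $\frac1N\sum_{i=1}^Nv^i=Q$ and $d{\bf X}_t={\bf v}_tdt$, ${\bf X}_0={\bf x}_0$. Furthermore, if in addition for some $\theta>0$ the map $v\mapsto L(x,v)-\frac{\theta}{2}|v|^2$ is convex for all $x\in\mathbb{R}$, then ${\bf v}^*$ is unique.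
   Context: $\mathbb{F}$ is the standard filtration generated by a one-dimensional Brownian motion on $[0,T]$; $\mathbb{H}_{\mathbb{F}}$ is the Hilbert space of measurable $\mathbb{F}$-adapted real processes with $\mathbb{E}[\int_0^Tv_t^2dt]<\infty$; $\mathbb{H}_{\mathbb{F}}^N$ is its $N$-fold product with the sum inner product; ${\bf v}=(v^1,\dots,v^N)$, ${\bf X}=(X^1,\dots,X^N)$. *)

theory Defs
  imports "HOL-Probability.Probability"
begin

definition nat_filt :: "'a measure \<Rightarrow> (real \<Rightarrow> 'a \<Rightarrow> real) \<Rightarrow> real \<Rightarrow> 'a set set" where
  "nat_filt M B t = sigma_sets (space M)
     (\<Union>r\<in>{0..t}. {B r -` A \<inter> space M | A. A \<in> sets borel})"

definition brownian_motion :: "'a measure \<Rightarrow> real \<Rightarrow> (real \<Rightarrow> 'a \<Rightarrow> real) \<Rightarrow> bool" where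
  "brownian_motion M T B \<longleftrightarrow> prob_space M \<and> 0 < T \<and>
     (\<forall>t\<in>{0..T}. B t \<in> borel_measurable M) \<and>
     (AE \<omega> in M. B 0 \<omega> = 0 \<and> continuous_on {0..T} (\<lambda>t. B t \<omega>)) \<and>
     (\<forall>s t. 0 \<le> s \<longrightarrow> s < t \<longrightarrow> t \<le> T \<longrightarrow>
        distributed M lborel (\<lambda>\<omega>. B t \<omega> - B s \<omega>)
          (\<lambda>x. ennreal (normal_density 0 (sqrt (t - s)) x)) \<and>
        prob_space.indep_set M
          (sigma_sets (space M) {(\<lambda>\<omega>. B t \<omega> - B s \<omega>) -` A \<inter> space M | A. A \<in> sets borel})
          (nat_filt M B s))"

definition std_filt :: "'a measure \<Rightarrow> (real \<Rightarrow> 'a \<Rightarrow> real) \<Rightarrow> real \<Rightarrow> 'a measure" where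
  "std_filt M B t = sigma (space M) (nat_filt M B t \<union> null_sets M)"

definition tP :: "'a measure \<Rightarrow> real \<Rightarrow> (real \<times> 'a) measure" where
  "tP M T = restrict_space lborel {0..T} \<Otimes>\<^sub>M M"

definition HF :: "'a measure \<Rightarrow> (real \<Rightarrow> 'a \<Rightarrow> real) \<Rightarrow> real \<Rightarrow> (real \<Rightarrow> 'a \<Rightarrow> real) set" where
  "HF M B T = {v. (\<lambda>(t,\<omega>). v t \<omega>) \<in> borel_measurable (tP M T) \<and>
      (\<forall>t\<in>{0..T}. v t \<in> borel_measurable (std_filt M B t)) \<and>
      (\<integral>\<^sup>+ p. ennreal ((v (fst p) (snd p))\<^sup>2) \<partial>(tP M T)) < \<infinity>}"

definition state :: "real \<Rightarrow> (real \<Rightarrow> 'a \<Rightarrow> real) \<Rightarrow> real \<Rightarrow> 'a \<Rightarrow> real" where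
  "state x0 v t \<omega> = x0 + (LINT s:{0..t}|lborel. v s \<omega>)"

definition cost :: "'a measure \<Rightarrow> real \<Rightarrow> nat \<Rightarrow> (real \<Rightarrow> real \<Rightarrow> real) \<Rightarrow> (real \<Rightarrow> real)
    \<Rightarrow> (nat \<Rightarrow> real) \<Rightarrow> (nat \<Rightarrow> real \<Rightarrow> 'a \<Rightarrow> real) \<Rightarrow> ennreal" where
  "cost M T N L \<Psi> x0 v = ennreal (1 / real N) *
     (\<Sum>i<N. \<integral>\<^sup>+ \<omega>. ((\<integral>\<^sup>+ t\<in>{0..T}. ennreal (L (state (x0 i) (v i) t \<omega>) (v i t \<omega>)) \<partial>lborel)
                     + ennreal (\<Psi> (state (x0 i) (v i) T \<omega>))) \<partial>M)"

definition admissible :: "'a measure \<Rightarrow> (real \<Rightarrow> 'a \<Rightarrow> real) \<Rightarrow> real \<Rightarrow> nat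
    \<Rightarrow> (real \<Rightarrow> 'a \<Rightarrow> real) \<Rightarrow> (nat \<Rightarrow> real \<Rightarrow> 'a \<Rightarrow> real) \<Rightarrow> bool" where
  "admissible M B T N Q v \<longleftrightarrow> (\<forall>i<N. v i \<in> HF M B T) \<and>
     (AE p in tP M T. (1 / real N) * (\<Sum>i<N. v i (fst p) (snd p)) = Q (fst p) (snd p))"

end

theory Submission
  imports Defs
begin

lemma convex_bdd_const:
  fixes f :: "real \<Rightarrow> real"
  assumes cv: "convex_on UNIV f" and bd: "\<And>x. f x \<le> K"
  shows "f x \<le> f y"
proof (rule ccontr)
  assume "\<not> f x \<le> f y"
  hence lt: "f y < f x" by simp
  define t where "t = (K - f x) / (f x - f y) + 1"
  have t0: "t > 0" using lt bd[of x] by (auto simp: t_def intro!: add_nonneg_pos divide_nonneg_pos)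
  define z where "z = x + t * (x - y)"
  have e: "(1+t) * x = t*y + z" by (simp add: z_def algebra_simps)
  have "x = (1 - 1/(1+t)) *\<^sub>R y + (1/(1+t)) *\<^sub>R z"
  proof -
    have "(1 - 1/(1+t)) *\<^sub>R y + (1/(1+t)) *\<^sub>R z = (t*y + z)/(1+t)"
    proof -
      have "1 - 1/(1+t) = t/(1+t)" using t0 by (simp add: field_simps)
      thus ?thesis by (simp add: add_divide_distrib)
    qed
    also have "\<dots> = x" using e t0 by (metis add_pos_pos less_numeral_extra(1) nonzero_mult_div_cancel_left order_less_irrefl)
    finally show ?thesis by simp
  qed
  hence "f x \<le> (1 - 1/(1+t)) * f y + (1/(1+t)) * f z"
    using convex_onD[OF cv, of "1/(1+t)" y z] t0 by simp
  moreover have "1 - 1/(1+t) = t/(1+t)" using t0 by (simp add: field_simps)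
  ultimately have "f x \<le> (t * f y + f z) / (1+t)" by (simp add: add_divide_distrib)
  hence "(1+t) * f x \<le> t * f y + f z" using t0 by (simp add: pos_le_divide_eq mult.commute)
  hence "f z \<ge> f x + t * (f x - f y)" by (simp add: algebra_simps)
  moreover have "t * (f x - f y) = (K - f x) + (f x - f y)" using lt unfolding t_def by (simp add: field_simps)
  ultimately have "f z > K" using lt by linarith
  thus False using bd[of z] by simp
qed

lemma liminf_add_ennreal:
  fixes f g :: "nat \<Rightarrow> ennreal"
  shows "liminf f + liminf g \<le> liminf (\<lambda>n. f n + g n)"
proof -
  let ?a = "\<lambda>n. INF k\<in>{n..}. f k" and ?b = "\<lambda>n. INF k\<in>{n..}. g k"
  have ia: "incseq ?a" "incseq ?b" by (auto simp: incseq_def intro!: INF_superset_mono)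
  have "liminf f + liminf g = (SUP n. ?a n + ?b n)"
    unfolding liminf_SUP_INF using ennreal_SUP_add[OF ia] by simp
  also have "\<dots> \<le> (SUP n. INF k\<in>{n..}. f k + g k)"
    by (intro SUP_mono) (auto intro!: INF_greatest add_mono INF_lower)
  finally show ?thesis unfolding liminf_SUP_INF .
qed

locale setting = prob_space M for M :: "'a measure" + fixes T :: real assumes Tpos: "0 < T"
begin

abbreviation "R \<equiv> restrict_space lborel {0..T}"

lemma space_R[simp]: "space R = {0..T}" by (simp add: space_restrict_space)

lemma emeasure_R: "emeasure R (space R) = ennreal T"
  using Tpos by (simp add: emeasure_restrict_space)

sublocale R: finite_measure R
  by (rule finite_measureI) (insert emeasure_R, simp)

sublocale RM: pair_sigma_finite R M
  by unfold_locales

lemma tP_eq: "tP M T = R \<Otimes>\<^sub>M M" by (simp add: tP_def)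

lemma sec_meas:
  assumes "(\<lambda>(t,\<omega>). u t \<omega>) \<in> borel_measurable (tP M T)" "\<omega> \<in> space M"
  shows "(\<lambda>t. u t \<omega>) \<in> borel_measurable R"
  using measurable_Pair1[OF assms(1)[unfolded tP_eq] assms(2)] by simp

lemma nn_R: "(\<integral>\<^sup>+t\<in>{0..T}. f t \<partial>lborel) = (\<integral>\<^sup>+t. f t \<partial>R)"
  by (simp add: nn_integral_restrict_space)

lemma int_R: fixes f :: "real \<Rightarrow> real" shows "(LINT t:{0..T}|lborel. f t) = (\<integral>t. f t \<partial>R)"
  unfolding set_lebesgue_integral_def using integral_restrict_space[of "{0..T}" lborel f] by simp

lemma state_R: "state x u T \<omega> = x + (\<integral>t. u t \<omega> \<partial>R)"
  unfolding state_def int_R ..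

lemma meas_nn:
  fixes f :: "real \<Rightarrow> 'a \<Rightarrow> ennreal"
  assumes "(\<lambda>(t,\<omega>). f t \<omega>) \<in> borel_measurable (tP M T)"
  shows "(\<lambda>\<omega>. \<integral>\<^sup>+t. f t \<omega> \<partial>R) \<in> borel_measurable M"
proof -
  have "(\<lambda>(\<omega>,t). f t \<omega>) \<in> borel_measurable (M \<Otimes>\<^sub>M R)"
    using assms unfolding tP_eq by (subst measurable_pair_swap_iff) simp
  thus ?thesis using R.borel_measurable_nn_integral[of "\<lambda>\<omega> t. f t \<omega>" M] by simp
qed

lemma meas_int:
  fixes f :: "real \<Rightarrow> 'a \<Rightarrow> real"
  assumes "(\<lambda>(t,\<omega>). f t \<omega>) \<in> borel_measurable (tP M T)"
  shows "(\<lambda>\<omega>. \<integral>t. f t \<omega> \<partial>R) \<in> borel_measurable M"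
proof -
  have "(\<lambda>(\<omega>,t). f t \<omega>) \<in> borel_measurable (M \<Otimes>\<^sub>M R)"
    using assms unfolding tP_eq by (subst measurable_pair_swap_iff) simp
  thus ?thesis using R.borel_measurable_lebesgue_integral[of "\<lambda>\<omega> t. f t \<omega>" M] by simp
qed

lemma meas_state:
  assumes "(\<lambda>(t,\<omega>). u t \<omega>) \<in> borel_measurable (tP M T)"
  shows "(\<lambda>\<omega>. state x u T \<omega>) \<in> borel_measurable M"
  unfolding state_R using meas_int[OF assms] by simp

lemma tonelli:
  fixes f :: "real \<Rightarrow> 'a \<Rightarrow> ennreal"
  assumes "(\<lambda>(t,\<omega>). f t \<omega>) \<in> borel_measurable (tP M T)"
  shows "(\<integral>\<^sup>+\<omega>. (\<integral>\<^sup>+t. f t \<omega> \<partial>R) \<partial>M) = (\<integral>\<^sup>+p. f (fst p) (snd p) \<partial>tP M T)"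
proof -
  have "(\<lambda>(t,\<omega>). f t \<omega>) = (\<lambda>p. f (fst p) (snd p))" by auto
  thus ?thesis using RM.nn_integral_snd[of "\<lambda>(t,\<omega>). f t \<omega>"] assms unfolding tP_eq by simp
qed

lemma HF_meas: "u \<in> HF M B T \<Longrightarrow> (\<lambda>(t,\<omega>). u t \<omega>) \<in> borel_measurable (tP M T)"
  by (simp add: HF_def)

lemma HF_fin: "u \<in> HF M B T \<Longrightarrow> (\<integral>\<^sup>+p. ennreal ((u (fst p) (snd p))\<^sup>2) \<partial>tP M T) < \<infinity>"
  by (simp add: HF_def)

lemma HF_meas2: assumes "u \<in> HF M B T" shows "(\<lambda>p. u (fst p) (snd p)) \<in> borel_measurable (tP M T)"
  using HF_meas[OF assms] by (simp add: case_prod_unfold)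

lemma HF_ae: assumes "u \<in> HF M B T"
  shows "AE \<omega> in M. (\<integral>\<^sup>+t. ennreal ((u t \<omega>)\<^sup>2) \<partial>R) < \<infinity>"
proof -
  note [measurable] = HF_meas2[OF assms]
  have m: "(\<lambda>(t,\<omega>). ennreal ((u t \<omega>)\<^sup>2)) \<in> borel_measurable (tP M T)"
    unfolding case_prod_unfold by measurable
  have "(\<integral>\<^sup>+\<omega>. (\<integral>\<^sup>+t. ennreal ((u t \<omega>)\<^sup>2) \<partial>R) \<partial>M) < \<infinity>"
    using tonelli[OF m] HF_fin[OF assms] by simp
  hence "AE \<omega> in M. (\<integral>\<^sup>+t. ennreal ((u t \<omega>)\<^sup>2) \<partial>R) \<noteq> \<infinity>"
    using meas_nn[OF m] by (intro nn_integral_noteq_infinite) auto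
  thus ?thesis by (simp add: less_top)
qed

lemma sq_int:
  fixes f :: "real \<Rightarrow> real"
  assumes f[measurable]: "f \<in> borel_measurable R" and fin: "(\<integral>\<^sup>+t. ennreal ((f t)\<^sup>2) \<partial>R) < \<infinity>"
  shows "integrable R f" "ennreal ((\<integral>t. f t \<partial>R)\<^sup>2) \<le> ennreal T * (\<integral>\<^sup>+t. ennreal ((f t)\<^sup>2) \<partial>R)"
proof -
  have m2: "(\<lambda>t. (f t)\<^sup>2) \<in> borel_measurable R" by measurable
  have "(\<integral>\<^sup>+t. ennreal (norm ((f t)\<^sup>2)) \<partial>R) < \<infinity>" using fin by simp
  hence "integrable R (\<lambda>t. (f t)\<^sup>2)" using m2 by (simp add: integrable_iff_bounded)
  thus fi: "integrable R f" by (rule R.square_integrable_imp_integrable[OF f])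
  have "ennreal (\<bar>\<integral>t. f t \<partial>R\<bar>) \<le> (\<integral>\<^sup>+t. ennreal \<bar>f t\<bar> \<partial>R)"
    using integral_norm_bound_ennreal[OF fi] by simp
  hence "ennreal (\<bar>\<integral>t. f t \<partial>R\<bar>) ^ 2 \<le> (\<integral>\<^sup>+t. ennreal \<bar>f t\<bar> \<partial>R) ^ 2"
    by (intro power_mono) auto
  also have "\<dots> = (\<integral>\<^sup>+t. ennreal \<bar>f t\<bar> * 1 \<partial>R) ^ 2" by simp
  also have "\<dots> \<le> (\<integral>\<^sup>+t. ennreal \<bar>f t\<bar> ^ 2 \<partial>R) * (\<integral>\<^sup>+t. 1 ^ 2 \<partial>R)"
    by (rule Cauchy_Schwarz_nn_integral) auto
  also have "(\<integral>\<^sup>+t. 1 ^ 2 \<partial>R) = ennreal T"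
    using emeasure_R by simp
  also have "(\<integral>\<^sup>+t. ennreal \<bar>f t\<bar> ^ 2 \<partial>R) = (\<integral>\<^sup>+t. ennreal ((f t)\<^sup>2) \<partial>R)"
    by (simp add: ennreal_power)
  finally have fin2: "ennreal (\<bar>\<integral>t. f t \<partial>R\<bar>) ^ 2 \<le> (\<integral>\<^sup>+t. ennreal ((f t)\<^sup>2) \<partial>R) * ennreal T" .
  have e: "ennreal ((\<integral>t. f t \<partial>R)\<^sup>2) = ennreal (\<bar>\<integral>t. f t \<partial>R\<bar>) ^ 2"
    by (simp add: ennreal_power)
  show "ennreal ((\<integral>t. f t \<partial>R)\<^sup>2) \<le> ennreal T * (\<integral>\<^sup>+t. ennreal ((f t)\<^sup>2) \<partial>R)"
    using fin2 unfolding e by (simp only: mult.commute)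
qed

lemma HF_lin:
  assumes u: "u \<in> HF M B T" and w: "w \<in> HF M B T"
  shows "(\<lambda>t \<omega>. a * u t \<omega> + b * w t \<omega>) \<in> HF M B T"
proof -
  have mu[measurable]: "(\<lambda>p. u (fst p) (snd p)) \<in> borel_measurable (tP M T)" using HF_meas2[OF u] .
  have mw[measurable]: "(\<lambda>p. w (fst p) (snd p)) \<in> borel_measurable (tP M T)" using HF_meas2[OF w] .
  have "(\<integral>\<^sup>+p. ennreal ((a * u (fst p) (snd p) + b * w (fst p) (snd p))\<^sup>2) \<partial>tP M T)
     \<le> (\<integral>\<^sup>+p. ennreal (2*a\<^sup>2) * ennreal ((u (fst p) (snd p))\<^sup>2) + ennreal (2*b\<^sup>2) * ennreal ((w (fst p) (snd p))\<^sup>2) \<partial>tP M T)"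
  proof (intro nn_integral_mono)
    fix p
    have "(a * u (fst p) (snd p) + b * w (fst p) (snd p))\<^sup>2 \<le> 2*a\<^sup>2 * (u (fst p) (snd p))\<^sup>2 + 2*b\<^sup>2 * (w (fst p) (snd p))\<^sup>2"
    proof -
      have "2*a\<^sup>2 * (u (fst p) (snd p))\<^sup>2 + 2*b\<^sup>2 * (w (fst p) (snd p))\<^sup>2 = (a * u (fst p) (snd p) + b * w (fst p) (snd p))\<^sup>2 + (a * u (fst p) (snd p) - b * w (fst p) (snd p))\<^sup>2"
        by (simp add: power2_eq_square algebra_simps)
      thus ?thesis by simp
    qed
    thus "ennreal ((a * u (fst p) (snd p) + b * w (fst p) (snd p))\<^sup>2) \<le> ennreal (2*a\<^sup>2) * ennreal ((u (fst p) (snd p))\<^sup>2) + ennreal (2*b\<^sup>2) * ennreal ((w (fst p) (snd p))\<^sup>2)"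
      by (simp add: ennreal_mult[symmetric] ennreal_plus[symmetric] del: ennreal_plus)
  qed
  also have "\<dots> = ennreal (2*a\<^sup>2) * (\<integral>\<^sup>+p. ennreal ((u (fst p) (snd p))\<^sup>2) \<partial>tP M T) + ennreal (2*b\<^sup>2) * (\<integral>\<^sup>+p. ennreal ((w (fst p) (snd p))\<^sup>2) \<partial>tP M T)"
    by (simp add: nn_integral_add nn_integral_cmult)
  also have "\<dots> < \<infinity>" using HF_fin[OF u] HF_fin[OF w] by (simp add: ennreal_mult_less_top)
  finally have fin: "(\<integral>\<^sup>+p. ennreal ((a * u (fst p) (snd p) + b * w (fst p) (snd p))\<^sup>2) \<partial>tP M T) < \<infinity>" .
  have ad: "(\<lambda>\<omega>. a * u t \<omega> + b * w t \<omega>) \<in> borel_measurable (std_filt M B t)" if "t \<in> {0..T}" for t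
  proof -
    have [measurable]: "u t \<in> borel_measurable (std_filt M B t)" "w t \<in> borel_measurable (std_filt M B t)"
      using u w that by (auto simp: HF_def)
    show ?thesis by measurable
  qed
  have "(\<lambda>(t,\<omega>). a * u t \<omega> + b * w t \<omega>) \<in> borel_measurable (tP M T)"
    unfolding case_prod_beta' by measurable
  thus ?thesis using fin ad unfolding HF_def by auto
qed

end

definition Jc :: "'a measure \<Rightarrow> real \<Rightarrow> (real\<Rightarrow>real) \<Rightarrow> (real\<Rightarrow>real) \<Rightarrow> real \<Rightarrow> (real\<Rightarrow>'a\<Rightarrow>real) \<Rightarrow> ennreal" where
"Jc M T l \<Psi> x u = (\<integral>\<^sup>+\<omega>. ((\<integral>\<^sup>+t\<in>{0..T}. ennreal (l (u t \<omega>)) \<partial>lborel) + ennreal (\<Psi> (state x u T \<omega>))) \<partial>M)"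

lemma cost_eq:
  assumes "\<And>x v. L x v = l v"
  shows "cost M T N L \<Psi> x0 v = ennreal (1 / real N) * (\<Sum>i<N. Jc M T l \<Psi> (x0 i) (v i))"
  unfolding cost_def Jc_def assms ..

lemma ennreal_ineq2:
  fixes a c k p q :: real
  assumes "0 \<le> a" "0 \<le> c" "0 \<le> k" "0 \<le> p" "0 \<le> q" "2*a + k*c \<le> p + q"
  shows "2 * ennreal a + ennreal k * ennreal c \<le> ennreal p + ennreal q"
proof -
  have "2 * ennreal a + ennreal k * ennreal c = ennreal (2*a + k*c)"
  proof -
    have "2 * ennreal a = ennreal (2*a)" using ennreal_mult[of 2 a] assms(1) by simp
    thus ?thesis using assms by (simp add: ennreal_mult[symmetric])
  qed
  also have "\<dots> \<le> ennreal (p + q)" using assms(6) by (rule ennreal_leI)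
  finally show ?thesis using assms by simp
qed

context setting begin

lemma Jc_R: "Jc M T l \<Psi> x u = (\<integral>\<^sup>+\<omega>. ((\<integral>\<^sup>+t. ennreal (l (u t \<omega>)) \<partial>R) + ennreal (\<Psi> (x + (\<integral>t. u t \<omega> \<partial>R)))) \<partial>M)"
  unfolding Jc_def nn_R state_R ..

lemma HF_ae_int: assumes "u \<in> HF M B T"
  shows "AE \<omega> in M. integrable R (\<lambda>t. u t \<omega>)"
  using HF_ae[OF assms] AE_space proof eventually_elim
  case (elim \<omega>)
  then show ?case using sq_int(1)[OF sec_meas[OF HF_meas[OF assms]]] by simp
qed

lemma meas_A:
  fixes f :: "real \<Rightarrow> 'a \<Rightarrow> real"
  assumes [measurable]: "(\<lambda>p. f (fst p) (snd p)) \<in> borel_measurable (tP M T)" and lc: "continuous_on UNIV l"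
  shows "(\<lambda>\<omega>. \<integral>\<^sup>+t. ennreal (l (f t \<omega>)) \<partial>R) \<in> borel_measurable M"
proof -
  note [measurable] = borel_measurable_continuous_onI[OF lc]
  have "(\<lambda>(t,\<omega>). ennreal (l (f t \<omega>))) \<in> borel_measurable (tP M T)"
    unfolding case_prod_unfold by measurable
  from meas_nn[OF this] show ?thesis by simp
qed

lemma meas_S:
  fixes f :: "real \<Rightarrow> 'a \<Rightarrow> real"
  assumes [measurable]: "(\<lambda>p. f (fst p) (snd p)) \<in> borel_measurable (tP M T)"
  shows "(\<lambda>\<omega>. x + (\<integral>t. f t \<omega> \<partial>R)) \<in> borel_measurable M"
proof -
  have "(\<lambda>(t,\<omega>). f t \<omega>) \<in> borel_measurable (tP M T)"
    unfolding case_prod_unfold by measurable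
  from meas_int[of f, OF this] show ?thesis by simp
qed

lemma meas_F:
  fixes f :: "real \<Rightarrow> 'a \<Rightarrow> real"
  assumes [measurable]: "(\<lambda>p. f (fst p) (snd p)) \<in> borel_measurable (tP M T)"
    and lc: "continuous_on UNIV l" and Pc: "continuous_on UNIV \<Psi>"
  shows "(\<lambda>\<omega>. (\<integral>\<^sup>+t. ennreal (l (f t \<omega>)) \<partial>R) + ennreal (\<Psi> (x + (\<integral>t. f t \<omega> \<partial>R)))) \<in> borel_measurable M"
proof -
  note [measurable] = meas_A[OF assms(1) lc] meas_S[of f x, OF assms(1)] borel_measurable_continuous_onI[OF Pc]
  show ?thesis by measurable
qed

lemma Jc_lower:
  assumes u: "u \<in> HF M B T" and lc: "continuous_on UNIV l" and Pc: "continuous_on UNIV \<Psi>"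
    and l0: "\<And>a. 0 \<le> l a" and P0: "\<And>a. 0 \<le> \<Psi> a"
    and co: "\<And>a. \<alpha> * a\<^sup>2 - \<beta> \<le> l a" and a0: "0 \<le> \<alpha>" and b0: "0 \<le> \<beta>"
  shows "ennreal \<alpha> * (\<integral>\<^sup>+p. ennreal ((u (fst p) (snd p))\<^sup>2) \<partial>tP M T) \<le> Jc M T l \<Psi> x u + ennreal (\<beta> * T)"
proof -
  note [measurable] = HF_meas2[OF u] borel_measurable_continuous_onI[OF lc]
  have gm: "(\<lambda>(t,\<omega>). ennreal ((u t \<omega>)\<^sup>2)) \<in> borel_measurable (tP M T)"
    unfolding case_prod_unfold by measurable
  have "ennreal \<alpha> * (\<integral>\<^sup>+p. ennreal ((u (fst p) (snd p))\<^sup>2) \<partial>tP M T)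
      = ennreal \<alpha> * (\<integral>\<^sup>+\<omega>. (\<integral>\<^sup>+t. ennreal ((u t \<omega>)\<^sup>2) \<partial>R) \<partial>M)"
    using tonelli[OF gm] by simp
  also have "\<dots> = (\<integral>\<^sup>+\<omega>. ennreal \<alpha> * (\<integral>\<^sup>+t. ennreal ((u t \<omega>)\<^sup>2) \<partial>R) \<partial>M)"
    using meas_nn[OF gm] by (simp add: nn_integral_cmult)
  also have "\<dots> \<le> (\<integral>\<^sup>+\<omega>. ((\<integral>\<^sup>+t. ennreal (l (u t \<omega>)) \<partial>R) + ennreal (\<Psi> (x + (\<integral>t. u t \<omega> \<partial>R)))) + ennreal (\<beta> * T) \<partial>M)"
  proof (rule nn_integral_mono_AE)
    show "AE \<omega> in M. ennreal \<alpha> * (\<integral>\<^sup>+t. ennreal ((u t \<omega>)\<^sup>2) \<partial>R) \<le> ((\<integral>\<^sup>+t. ennreal (l (u t \<omega>)) \<partial>R) + ennreal (\<Psi> (x + (\<integral>t. u t \<omega> \<partial>R)))) + ennreal (\<beta> * T)"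
      using AE_space
    proof eventually_elim
      case (elim \<omega>)
      have [measurable]: "(\<lambda>t. u t \<omega>) \<in> borel_measurable R"
        using sec_meas[OF HF_meas[OF u]] elim by auto
      have "ennreal \<alpha> * (\<integral>\<^sup>+t. ennreal ((u t \<omega>)\<^sup>2) \<partial>R) = (\<integral>\<^sup>+t. ennreal (\<alpha> * (u t \<omega>)\<^sup>2) \<partial>R)"
        using a0 by (simp add: nn_integral_cmult ennreal_mult)
      also have "\<dots> \<le> (\<integral>\<^sup>+t. ennreal (l (u t \<omega>)) + ennreal \<beta> \<partial>R)"
      proof (intro nn_integral_mono)
        fix t
        have "\<alpha> * (u t \<omega>)\<^sup>2 \<le> l (u t \<omega>) + \<beta>" using co[of "u t \<omega>"] by simp
        hence "ennreal (\<alpha> * (u t \<omega>)\<^sup>2) \<le> ennreal (l (u t \<omega>) + \<beta>)" by (rule ennreal_leI)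
        thus "ennreal (\<alpha> * (u t \<omega>)\<^sup>2) \<le> ennreal (l (u t \<omega>)) + ennreal \<beta>" using l0 b0 by simp
      qed
      also have "\<dots> = (\<integral>\<^sup>+t. ennreal (l (u t \<omega>)) \<partial>R) + ennreal (\<beta> * T)"
        using emeasure_R b0 Tpos by (simp add: nn_integral_add ennreal_mult)
      also have "\<dots> \<le> ((\<integral>\<^sup>+t. ennreal (l (u t \<omega>)) \<partial>R) + ennreal (\<Psi> (x + (\<integral>t. u t \<omega> \<partial>R)))) + ennreal (\<beta> * T)"
        by (intro add_mono) auto
      finally show ?case .
    qed
  qed
  also have "\<dots> = Jc M T l \<Psi> x u + ennreal (\<beta> * T)"
    unfolding Jc_R using meas_F[OF HF_meas2[OF u] lc Pc, of x] by (simp add: nn_integral_add emeasure_space_1)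
  finally show ?thesis .
qed

lemma Jc_finite:
  assumes u: "u \<in> HF M B T" and lc: "continuous_on UNIV l" and Pc: "continuous_on UNIV \<Psi>"
    and l0: "\<And>a. 0 \<le> l a" and P0: "\<And>a. 0 \<le> \<Psi> a"
    and lb: "\<And>a. l a \<le> b * (1 + \<bar>a\<bar>\<^sup>2)" and Pb: "\<And>a. \<Psi> a \<le> C * (1 + \<bar>a\<bar>\<^sup>2)"
    and b0: "0 \<le> b" and C0: "0 \<le> C"
  shows "Jc M T l \<Psi> x u < \<infinity>"
proof -
  note [measurable] = HF_meas2[OF u] borel_measurable_continuous_onI[OF lc]
  have gm: "(\<lambda>(t,\<omega>). ennreal ((u t \<omega>)\<^sup>2)) \<in> borel_measurable (tP M T)"
    unfolding case_prod_unfold by measurable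
  define S where "S \<omega> = (\<integral>\<^sup>+t. ennreal ((u t \<omega>)\<^sup>2) \<partial>R)" for \<omega>
  have mS[measurable]: "S \<in> borel_measurable M" using meas_nn[OF gm] unfolding S_def by simp
  define K0 where "K0 = ennreal (b * T + C * (1 + 2 * x\<^sup>2))"
  define K1 where "K1 = ennreal (b + 2 * C * T)"
  have "Jc M T l \<Psi> x u \<le> (\<integral>\<^sup>+\<omega>. K0 + K1 * S \<omega> \<partial>M)"
    unfolding Jc_R
  proof (rule nn_integral_mono_AE)
    show "AE \<omega> in M. (\<integral>\<^sup>+t. ennreal (l (u t \<omega>)) \<partial>R) + ennreal (\<Psi> (x + (\<integral>t. u t \<omega> \<partial>R))) \<le> K0 + K1 * S \<omega>"
      using AE_space HF_ae[OF u]
    proof eventually_elim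
      case (elim \<omega>)
      have sm[measurable]: "(\<lambda>t. u t \<omega>) \<in> borel_measurable R"
        using sec_meas[OF HF_meas[OF u]] elim by auto
      define I where "I = (\<integral>t. u t \<omega> \<partial>R)"
      have I2: "ennreal (I\<^sup>2) \<le> ennreal T * S \<omega>"
        unfolding I_def S_def using sq_int(2)[OF sm] elim by simp
      have "(\<integral>\<^sup>+t. ennreal (l (u t \<omega>)) \<partial>R) \<le> (\<integral>\<^sup>+t. ennreal b + ennreal b * ennreal ((u t \<omega>)\<^sup>2) \<partial>R)"
      proof (intro nn_integral_mono)
        fix t
        have "l (u t \<omega>) \<le> b + b * (u t \<omega>)\<^sup>2" using lb[of "u t \<omega>"] by (simp add: algebra_simps)
        hence "ennreal (l (u t \<omega>)) \<le> ennreal (b + b * (u t \<omega>)\<^sup>2)" by (rule ennreal_leI)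
        thus "ennreal (l (u t \<omega>)) \<le> ennreal b + ennreal b * ennreal ((u t \<omega>)\<^sup>2)"
          using b0 by (simp add: ennreal_mult)
      qed
      also have "\<dots> = ennreal (b * T) + ennreal b * S \<omega>"
        unfolding S_def using emeasure_R b0 Tpos by (simp add: nn_integral_add nn_integral_cmult ennreal_mult)
      finally have A: "(\<integral>\<^sup>+t. ennreal (l (u t \<omega>)) \<partial>R) \<le> ennreal (b * T) + ennreal b * S \<omega>" .
      have "\<Psi> (x + I) \<le> C * (1 + 2 * x\<^sup>2) + 2 * C * I\<^sup>2"
      proof -
        have "(x + I)\<^sup>2 \<le> 2 * x\<^sup>2 + 2 * I\<^sup>2"
        proof -
          have "2 * x\<^sup>2 + 2 * I\<^sup>2 = (x + I)\<^sup>2 + (x - I)\<^sup>2" by (simp add: power2_eq_square algebra_simps)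
          thus ?thesis by simp
        qed
        hence "C * (1 + (x + I)\<^sup>2) \<le> C * (1 + 2 * x\<^sup>2 + 2 * I\<^sup>2)" using C0 by (intro mult_left_mono) auto
        thus ?thesis using Pb[of "x + I"] by (simp add: algebra_simps)
      qed
      hence "ennreal (\<Psi> (x + I)) \<le> ennreal (C * (1 + 2 * x\<^sup>2) + 2 * C * I\<^sup>2)" by (rule ennreal_leI)
      also have "\<dots> = ennreal (C * (1 + 2 * x\<^sup>2)) + ennreal (2 * C) * ennreal (I\<^sup>2)"
        using C0 by (simp add: ennreal_mult)
      also have "\<dots> \<le> ennreal (C * (1 + 2 * x\<^sup>2)) + ennreal (2 * C) * (ennreal T * S \<omega>)"
        by (intro add_mono mult_left_mono I2) auto
      finally have P: "ennreal (\<Psi> (x + I)) \<le> ennreal (C * (1 + 2 * x\<^sup>2)) + ennreal (2 * C * T) * S \<omega>"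
        using C0 Tpos by (simp add: ennreal_mult mult.assoc)
      have "(\<integral>\<^sup>+t. ennreal (l (u t \<omega>)) \<partial>R) + ennreal (\<Psi> (x + I))
          \<le> (ennreal (b * T) + ennreal b * S \<omega>) + (ennreal (C * (1 + 2 * x\<^sup>2)) + ennreal (2 * C * T) * S \<omega>)"
        by (rule add_mono[OF A P])
      also have "\<dots> = K0 + K1 * S \<omega>"
      proof -
        have k0: "K0 = ennreal (b * T) + ennreal (C * (1 + 2 * x\<^sup>2))"
          unfolding K0_def by (rule ennreal_plus) (use b0 C0 Tpos in auto)
        have k1: "K1 = ennreal b + ennreal (2 * C * T)"
          unfolding K1_def by (rule ennreal_plus) (use b0 C0 Tpos in auto)
        show ?thesis by (simp only: k0 k1 distrib_right add_ac)
      qed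
      finally show ?case unfolding I_def .
    qed
  qed
  also have "\<dots> = K0 + K1 * (\<integral>\<^sup>+\<omega>. S \<omega> \<partial>M)"
    by (simp add: nn_integral_add nn_integral_cmult emeasure_space_1)
  also have "(\<integral>\<^sup>+\<omega>. S \<omega> \<partial>M) = (\<integral>\<^sup>+p. ennreal ((u (fst p) (snd p))\<^sup>2) \<partial>tP M T)"
    unfolding S_def using tonelli[OF gm] by simp
  also have "K0 + K1 * \<dots> < \<infinity>"
    using HF_fin[OF u] unfolding K0_def K1_def by (simp add: ennreal_mult_less_top)
  finally show ?thesis .
qed

lemma Jc_mid:
  assumes u: "u \<in> HF M B T" and w: "w \<in> HF M B T"
    and lc: "continuous_on UNIV l" and l0: "\<And>a. 0 \<le> l a"
    and Pc: "continuous_on UNIV \<Psi>" and P0: "\<And>a. 0 \<le> \<Psi> a"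
    and Pcv: "\<And>a b. 2 * \<Psi> (1/2*a + 1/2*b) \<le> \<Psi> a + \<Psi> b"
    and lcv: "\<And>a b. 2 * l (1/2*a + 1/2*b) + \<kappa> * (a-b)\<^sup>2 \<le> l a + l b" and k0: "0 \<le> \<kappa>"
  shows "2 * Jc M T l \<Psi> x (\<lambda>t \<omega>. 1/2 * u t \<omega> + 1/2 * w t \<omega>)
     + ennreal \<kappa> * (\<integral>\<^sup>+p. ennreal ((u (fst p) (snd p) - w (fst p) (snd p))\<^sup>2) \<partial>tP M T)
     \<le> Jc M T l \<Psi> x u + Jc M T l \<Psi> x w"
proof -
  note [measurable] = HF_meas2[OF u] HF_meas2[OF w]
    borel_measurable_continuous_onI[OF lc] borel_measurable_continuous_onI[OF Pc]
  define mid where "mid = (\<lambda>t \<omega>. 1/2 * u t \<omega> + 1/2 * w t \<omega>)"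
  define A where "A f \<omega> = (\<integral>\<^sup>+t. ennreal (l (f t \<omega>)) \<partial>R)" for f :: "real \<Rightarrow> 'a \<Rightarrow> real" and \<omega>
  define S where "S f \<omega> = x + (\<integral>t. f t \<omega> \<partial>R)" for f :: "real \<Rightarrow> 'a \<Rightarrow> real" and \<omega>
  define G where "G \<omega> = (\<integral>\<^sup>+t. ennreal ((u t \<omega> - w t \<omega>)\<^sup>2) \<partial>R)" for \<omega>
  have mA: "A f \<in> borel_measurable M" if "(\<lambda>p. f (fst p) (snd p)) \<in> borel_measurable (tP M T)" for f
  proof -
    note [measurable] = that
    have "(\<lambda>(t,\<omega>). ennreal (l (f t \<omega>))) \<in> borel_measurable (tP M T)"
      unfolding case_prod_unfold by measurable
    from meas_nn[OF this] show ?thesis unfolding A_def by simp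
  qed
  have mS: "S f \<in> borel_measurable M" if "(\<lambda>p. f (fst p) (snd p)) \<in> borel_measurable (tP M T)" for f
  proof -
    note [measurable] = that
    have "(\<lambda>(t,\<omega>). f t \<omega>) \<in> borel_measurable (tP M T)"
      unfolding case_prod_unfold by measurable
    from meas_int[OF this] show ?thesis unfolding S_def by simp
  qed
  have mmid[measurable]: "(\<lambda>p. mid (fst p) (snd p)) \<in> borel_measurable (tP M T)"
    unfolding mid_def by measurable
  have gm: "(\<lambda>(t,\<omega>). ennreal ((u t \<omega> - w t \<omega>)\<^sup>2)) \<in> borel_measurable (tP M T)"
    unfolding case_prod_unfold by measurable
  have mG: "G \<in> borel_measurable M" using meas_nn[OF gm] unfolding G_def by simp
  have mAu[measurable]: "A u \<in> borel_measurable M" "A w \<in> borel_measurable M" "A mid \<in> borel_measurable M"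
    using mA HF_meas2[OF u] HF_meas2[OF w] mmid by auto
  have mSu[measurable]: "S u \<in> borel_measurable M" "S w \<in> borel_measurable M" "S mid \<in> borel_measurable M"
    using mS HF_meas2[OF u] HF_meas2[OF w] mmid by auto
  note [measurable] = mG
  have pw: "AE \<omega> in M. 2 * (A mid \<omega> + ennreal (\<Psi> (S mid \<omega>))) + ennreal \<kappa> * G \<omega>
        \<le> (A u \<omega> + ennreal (\<Psi> (S u \<omega>))) + (A w \<omega> + ennreal (\<Psi> (S w \<omega>)))"
    using HF_ae_int[OF u] HF_ae_int[OF w] AE_space
  proof eventually_elim
    case (elim \<omega>)
    have [measurable]: "(\<lambda>t. u t \<omega>) \<in> borel_measurable R" "(\<lambda>t. w t \<omega>) \<in> borel_measurable R"
      using sec_meas[OF HF_meas[OF u]] sec_meas[OF HF_meas[OF w]] elim by auto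
    have a: "2 * A mid \<omega> + ennreal \<kappa> * G \<omega> \<le> A u \<omega> + A w \<omega>"
    proof -
      have "2 * A mid \<omega> + ennreal \<kappa> * G \<omega> = (\<integral>\<^sup>+t. 2 * ennreal (l (mid t \<omega>)) + ennreal \<kappa> * ennreal ((u t \<omega> - w t \<omega>)\<^sup>2) \<partial>R)"
        unfolding A_def G_def mid_def by (simp add: nn_integral_add nn_integral_cmult)
      also have "\<dots> \<le> (\<integral>\<^sup>+t. ennreal (l (u t \<omega>)) + ennreal (l (w t \<omega>)) \<partial>R)"
        by (intro nn_integral_mono ennreal_ineq2) (use lcv[simplified] in \<open>auto simp: l0 k0 mid_def\<close>)
      also have "\<dots> = A u \<omega> + A w \<omega>"
        unfolding A_def by (simp add: nn_integral_add)
      finally show ?thesis .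
    qed
    have "S mid \<omega> = 1/2 * S u \<omega> + 1/2 * S w \<omega>"
      unfolding S_def mid_def using elim by (simp add: algebra_simps)
    hence b: "2 * ennreal (\<Psi> (S mid \<omega>)) \<le> ennreal (\<Psi> (S u \<omega>)) + ennreal (\<Psi> (S w \<omega>))"
      using ennreal_ineq2[of "\<Psi> (S mid \<omega>)" 0 0 "\<Psi> (S u \<omega>)" "\<Psi> (S w \<omega>)"] P0 Pcv by simp
    have "2 * (A mid \<omega> + ennreal (\<Psi> (S mid \<omega>))) + ennreal \<kappa> * G \<omega>
        = (2 * A mid \<omega> + ennreal \<kappa> * G \<omega>) + 2 * ennreal (\<Psi> (S mid \<omega>))"
      by (simp add: distrib_left ac_simps)
    also have "\<dots> \<le> (A u \<omega> + A w \<omega>) + (ennreal (\<Psi> (S u \<omega>)) + ennreal (\<Psi> (S w \<omega>)))"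
      by (rule add_mono[OF a b])
    finally show ?case by (simp add: ac_simps)
  qed
  have "2 * Jc M T l \<Psi> x mid + ennreal \<kappa> * (\<integral>\<^sup>+\<omega>. G \<omega> \<partial>M)
      = (\<integral>\<^sup>+\<omega>. 2 * (A mid \<omega> + ennreal (\<Psi> (S mid \<omega>))) + ennreal \<kappa> * G \<omega> \<partial>M)"
    unfolding Jc_R A_def[symmetric] S_def[symmetric] by (simp add: nn_integral_add nn_integral_cmult)
  also have "\<dots> \<le> (\<integral>\<^sup>+\<omega>. (A u \<omega> + ennreal (\<Psi> (S u \<omega>))) + (A w \<omega> + ennreal (\<Psi> (S w \<omega>))) \<partial>M)"
    by (rule nn_integral_mono_AE[OF pw])
  also have "\<dots> = Jc M T l \<Psi> x u + Jc M T l \<Psi> x w"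
    unfolding Jc_R A_def[symmetric] S_def[symmetric] by (simp add: nn_integral_add)
  finally show ?thesis unfolding mid_def[symmetric] G_def tonelli[OF gm] by simp
qed

end

lemma seq_conv:
  fixes a :: "nat \<Rightarrow> real"
  assumes H: "(\<Sum>j. ennreal (2^j * (a (Suc j) - a j)\<^sup>2)) \<noteq> \<infinity>"
  shows "convergent a" "\<bar>a n\<bar> \<le> \<bar>a 0\<bar> + 2 + enn2real (\<Sum>j. ennreal (2^j * (a (Suc j) - a j)\<^sup>2))"
proof -
  define d where "d j = a (Suc j) - a j" for j
  define e where "e j = 2^j * (d j)\<^sup>2" for j
  have e0: "0 \<le> e j" for j unfolding e_def by simp
  have H': "(\<Sum>j. ennreal (e j)) \<noteq> \<infinity>" using H unfolding e_def d_def .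
  have se: "summable e" by (rule summable_suminf_not_top) (use e0 H' in simp_all)
  have Hs: "enn2real (\<Sum>j. ennreal (2^j * (a (Suc j) - a j)\<^sup>2)) = suminf e"
  proof -
    have "(\<Sum>j. ennreal (2^j * (a (Suc j) - a j)\<^sup>2)) = (\<Sum>j. ennreal (e j))" unfolding e_def d_def ..
    also have "\<dots> = ennreal (suminf e)" by (rule suminf_ennreal2[OF e0 se])
    finally show ?thesis using suminf_nonneg[OF se e0] by simp
  qed
  have dle: "\<bar>d j\<bar> \<le> (1/2)^j + e j" for j
  proof (cases "\<bar>d j\<bar> \<le> (1/2)^j")
    case True thus ?thesis using e0[of j] by linarith
  next
    case False
    hence "1 < 2^j * \<bar>d j\<bar>" by (simp add: power_one_over field_simps)
    hence "\<bar>d j\<bar> \<le> (2^j * \<bar>d j\<bar>) * \<bar>d j\<bar>" by (simp add: mult_le_cancel_right1)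
    also have "\<dots> = e j" unfolding e_def by (simp add: power2_eq_square)
    finally show ?thesis using zero_le_power[of "1/2::real" j] by linarith
  qed
  have sg: "summable (\<lambda>j. (1/2::real)^j + e j)"
    by (intro summable_add summable_geometric se) simp
  have sd: "summable (\<lambda>j. \<bar>d j\<bar>)"
    by (rule summable_comparison_test'[OF sg, of 0]) (use dle in simp)
  have sd': "summable d" using sd by (rule summable_rabs_cancel)
  have tel: "a n = a 0 + (\<Sum>j<n. d j)" for n
    unfolding d_def by (simp add: sum_lessThan_telescope)
  have "(\<lambda>n. a 0 + (\<Sum>j<n. d j)) \<longlonglongrightarrow> a 0 + suminf d"
    by (intro tendsto_add tendsto_const summable_LIMSEQ sd')
  thus "convergent a" unfolding tel[symmetric] convergent_def by blast
  have "\<bar>a n\<bar> \<le> \<bar>a 0\<bar> + (\<Sum>j<n. \<bar>d j\<bar>)" unfolding tel[of n]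
    by (rule order_trans[OF abs_triangle_ineq]) (simp add: sum_abs)
  also have "(\<Sum>j<n. \<bar>d j\<bar>) \<le> (\<Sum>j<n. (1/2::real)^j + e j)" by (intro sum_mono dle)
  also have "\<dots> \<le> (\<Sum>j. (1/2::real)^j + e j)"
    by (rule sum_le_suminf[OF sg]) (auto intro: add_nonneg_nonneg e0)
  also have "\<dots> = 2 + suminf e"
    using suminf_add[OF summable_geometric[of "1/2::real"] se] suminf_geometric[of "1/2::real"] by simp
  finally show "\<bar>a n\<bar> \<le> \<bar>a 0\<bar> + 2 + enn2real (\<Sum>j. ennreal (2^j * (a (Suc j) - a j)\<^sup>2))"
    unfolding Hs by simp
qed

context setting begin

lemma limit_props:
  fixes z :: "nat \<Rightarrow> real \<Rightarrow> 'a \<Rightarrow> real"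
  assumes z: "\<And>j. z j \<in> HF M B T"
    and dz: "\<And>j. (\<integral>\<^sup>+p. ennreal ((z (Suc j) (fst p) (snd p) - z j (fst p) (snd p))\<^sup>2) \<partial>tP M T) \<le> ennreal ((1/4)^j)"
  shows "AE p in tP M T. (\<lambda>j. z j (fst p) (snd p)) \<longlonglongrightarrow> lim (\<lambda>j. z j (fst p) (snd p))"
    "AE \<omega> in M. AE t in R. (\<lambda>j. z j t \<omega>) \<longlonglongrightarrow> lim (\<lambda>j. z j t \<omega>)"
    "AE \<omega> in M. (\<lambda>j. \<integral>t. z j t \<omega> \<partial>R) \<longlonglongrightarrow> (\<integral>t. lim (\<lambda>j. z j t \<omega>) \<partial>R)"
    "(\<lambda>p. lim (\<lambda>j. z j (fst p) (snd p))) \<in> borel_measurable (tP M T)"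
proof -
  note zm[measurable] = HF_meas2[OF z]
  show wm[measurable]: "(\<lambda>p. lim (\<lambda>j. z j (fst p) (snd p))) \<in> borel_measurable (tP M T)"
    by measurable
  define H where "H t \<omega> = (\<Sum>j. ennreal (2^j * (z (Suc j) t \<omega> - z j t \<omega>)\<^sup>2))" for t \<omega>
  have Hm[measurable]: "(\<lambda>p. H (fst p) (snd p)) \<in> borel_measurable (tP M T)"
    unfolding H_def by measurable
  have Hm': "(\<lambda>(t,\<omega>). H t \<omega>) \<in> borel_measurable (tP M T)"
    unfolding case_prod_unfold by measurable
  have conv: "(\<lambda>j. z j t \<omega>) \<longlonglongrightarrow> lim (\<lambda>j. z j t \<omega>)" if "H t \<omega> \<noteq> \<infinity>" for t \<omega>
    using seq_conv(1)[of "\<lambda>j. z j t \<omega>"] that unfolding H_def convergent_LIMSEQ_iff by simp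
  have "(\<integral>\<^sup>+p. H (fst p) (snd p) \<partial>tP M T)
      = (\<Sum>j. \<integral>\<^sup>+p. ennreal (2^j * (z (Suc j) (fst p) (snd p) - z j (fst p) (snd p))\<^sup>2) \<partial>tP M T)"
    unfolding H_def by (rule nn_integral_suminf) measurable
  also have "\<dots> = (\<Sum>j. ennreal (2^j) * \<integral>\<^sup>+p. ennreal ((z (Suc j) (fst p) (snd p) - z j (fst p) (snd p))\<^sup>2) \<partial>tP M T)"
    by (intro suminf_cong) (simp add: nn_integral_cmult ennreal_mult)
  also have "\<dots> \<le> (\<Sum>j. ennreal (2^j) * ennreal ((1/4)^j))"
    by (intro suminf_le mult_left_mono dz) auto
  also have "\<dots> = (\<Sum>j. ennreal ((1/2)^j))"
    by (intro suminf_cong) (simp add: ennreal_mult[symmetric] power_mult_distrib[symmetric])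
  also have "\<dots> = ennreal 2"
  proof -
    have sg: "summable (\<lambda>j. (1/2::real)^j)" by (rule summable_geometric) simp
    have g2: "(\<Sum>j. (1/2::real)^j) = 1 / (1 - 1/2)" by (rule suminf_geometric) simp
    have "(\<Sum>j. ennreal ((1/2::real)^j)) = ennreal (\<Sum>j. (1/2::real)^j)"
      by (rule suminf_ennreal2[OF _ sg]) simp
    also have "(\<Sum>j. (1/2::real)^j) = 2" unfolding g2 by simp
    finally show ?thesis .
  qed
  finally have Hfin: "(\<integral>\<^sup>+p. H (fst p) (snd p) \<partial>tP M T) \<noteq> \<infinity>" by (auto simp: top_unique)
  show "AE p in tP M T. (\<lambda>j. z j (fst p) (snd p)) \<longlonglongrightarrow> lim (\<lambda>j. z j (fst p) (snd p))"
    using nn_integral_noteq_infinite[OF Hm Hfin] by eventually_elim (rule conv)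
  have Hfin2: "(\<integral>\<^sup>+\<omega>. (\<integral>\<^sup>+t. H t \<omega> \<partial>R) \<partial>M) \<noteq> \<infinity>"
    using Hfin tonelli[OF Hm'] by simp
  have aeH: "AE \<omega> in M. (\<integral>\<^sup>+t. H t \<omega> \<partial>R) \<noteq> \<infinity>"
    by (rule nn_integral_noteq_infinite[OF meas_nn[OF Hm'] Hfin2])
  have aeH2: "AE \<omega> in M. AE t in R. H t \<omega> \<noteq> \<infinity>"
    using aeH AE_space
  proof eventually_elim
    case (elim \<omega>)
    have "(\<lambda>t. H t \<omega>) \<in> borel_measurable R" using sec_meas[OF Hm'] elim by simp
    thus ?case using elim by (intro nn_integral_noteq_infinite) auto
  qed
  show "AE \<omega> in M. AE t in R. (\<lambda>j. z j t \<omega>) \<longlonglongrightarrow> lim (\<lambda>j. z j t \<omega>)"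
    using aeH2
  proof eventually_elim
    case (elim \<omega>)
    from elim show ?case by eventually_elim (rule conv)
  qed
  show "AE \<omega> in M. (\<lambda>j. \<integral>t. z j t \<omega> \<partial>R) \<longlonglongrightarrow> (\<integral>t. lim (\<lambda>j. z j t \<omega>) \<partial>R)"
    using aeH aeH2 HF_ae[OF z[of 0]] AE_space
  proof eventually_elim
    case (elim \<omega>)
    have s0[measurable]: "(\<lambda>t. z 0 t \<omega>) \<in> borel_measurable R"
      using sec_meas[OF HF_meas[OF z]] elim by simp
    have sj[measurable]: "(\<lambda>t. z j t \<omega>) \<in> borel_measurable R" for j
      using sec_meas[OF HF_meas[OF z]] elim by simp
    have sH[measurable]: "(\<lambda>t. H t \<omega>) \<in> borel_measurable R" using sec_meas[OF Hm'] elim by simp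
    have wm': "(\<lambda>(t,\<omega>). lim (\<lambda>j. z j t \<omega>)) \<in> borel_measurable (tP M T)"
      unfolding case_prod_unfold by measurable
    have sw: "(\<lambda>t. lim (\<lambda>j. z j t \<omega>)) \<in> borel_measurable R" using sec_meas[OF wm'] elim by simp
    define g where "g t = \<bar>z 0 t \<omega>\<bar> + 2 + enn2real (H t \<omega>)" for t
    have ig: "integrable R g"
    proof -
      have i0: "integrable R (\<lambda>t. z 0 t \<omega>)" using sq_int(1)[OF s0] elim by simp
      have "(\<integral>\<^sup>+t. ennreal (norm (enn2real (H t \<omega>))) \<partial>R) \<le> (\<integral>\<^sup>+t. H t \<omega> \<partial>R)"
        by (intro nn_integral_mono) (simp add: ennreal_enn2real_if)
      hence "integrable R (\<lambda>t. enn2real (H t \<omega>))"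
        using elim by (subst integrable_iff_bounded) (auto simp: less_top)
      moreover have "integrable R (\<lambda>t. \<bar>z 0 t \<omega>\<bar> + 2)"
        by (rule Bochner_Integration.integrable_add[OF integrable_abs[OF i0] R.integrable_const])
      ultimately show ?thesis unfolding g_def by (rule Bochner_Integration.integrable_add[rotated])
    qed
    show ?case
    proof (rule integral_dominated_convergence[OF sw sj ig])
      show "AE t in R. (\<lambda>j. z j t \<omega>) \<longlonglongrightarrow> lim (\<lambda>j. z j t \<omega>)"
        using elim(2) by eventually_elim (rule conv)
      show "AE t in R. norm (z j t \<omega>) \<le> g t" for j
        using elim(2) by eventually_elim (use seq_conv(2)[of "\<lambda>j. z j _ \<omega>"] in \<open>auto simp: g_def H_def\<close>)
    qed
  qed
qed

end

lemma isCont_of_con: "continuous_on UNIV f \<Longrightarrow> isCont f x"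
  by (simp add: continuous_on_eq_continuous_at)

context setting begin

lemma limit_HF:
  fixes z :: "nat \<Rightarrow> real \<Rightarrow> 'a \<Rightarrow> real"
  assumes z: "\<And>j. z j \<in> HF M B T"
   and ae: "AE p in tP M T. (\<lambda>j. z j (fst p) (snd p)) \<longlonglongrightarrow> lim (\<lambda>j. z j (fst p) (snd p))"
   and bd: "\<And>j. (\<integral>\<^sup>+p. ennreal ((z j (fst p) (snd p))\<^sup>2) \<partial>tP M T) \<le> K" and K: "K < \<infinity>"
  shows "(\<lambda>t \<omega>. lim (\<lambda>j. z j t \<omega>)) \<in> HF M B T"
proof -
  note zm[measurable] = HF_meas2[OF z]
  have m: "(\<lambda>(t,\<omega>). lim (\<lambda>j. z j t \<omega>)) \<in> borel_measurable (tP M T)"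
    unfolding case_prod_unfold by measurable
  have ad: "(\<lambda>\<omega>. lim (\<lambda>j. z j t \<omega>)) \<in> borel_measurable (std_filt M B t)" if "t \<in> {0..T}" for t
  proof -
    have [measurable]: "z j t \<in> borel_measurable (std_filt M B t)" for j using z[of j] that by (auto simp: HF_def)
    show ?thesis by measurable
  qed
  have "(\<integral>\<^sup>+p. ennreal ((lim (\<lambda>j. z j (fst p) (snd p)))\<^sup>2) \<partial>tP M T)
      = (\<integral>\<^sup>+p. liminf (\<lambda>j. ennreal ((z j (fst p) (snd p))\<^sup>2)) \<partial>tP M T)"
  proof (rule nn_integral_cong_AE)
    show "AE p in tP M T. ennreal ((lim (\<lambda>j. z j (fst p) (snd p)))\<^sup>2) = liminf (\<lambda>j. ennreal ((z j (fst p) (snd p))\<^sup>2))"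
      using ae
    proof eventually_elim
      case (elim p)
      have "(\<lambda>j. ennreal ((z j (fst p) (snd p))\<^sup>2)) \<longlonglongrightarrow> ennreal ((lim (\<lambda>j. z j (fst p) (snd p)))\<^sup>2)"
        by (intro tendsto_ennrealI tendsto_power elim)
      from lim_imp_Liminf[OF _ this] show ?case by simp
    qed
  qed
  also have "\<dots> \<le> liminf (\<lambda>j. \<integral>\<^sup>+p. ennreal ((z j (fst p) (snd p))\<^sup>2) \<partial>tP M T)"
    by (rule nn_integral_liminf) measurable
  also have "\<dots> \<le> limsup (\<lambda>j. \<integral>\<^sup>+p. ennreal ((z j (fst p) (snd p))\<^sup>2) \<partial>tP M T)"
    by (rule Liminf_le_Limsup) simp
  also have "\<dots> \<le> K" by (rule Limsup_bounded) (use bd in auto)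
  also have "\<dots> < \<infinity>" by (rule K)
  finally show ?thesis using m ad unfolding HF_def by auto
qed

lemma Jc_lsc:
  fixes z :: "nat \<Rightarrow> real \<Rightarrow> 'a \<Rightarrow> real"
  assumes z: "\<And>j. z j \<in> HF M B T" and w: "w \<in> HF M B T"
   and ae2: "AE \<omega> in M. AE t in R. (\<lambda>j. z j t \<omega>) \<longlonglongrightarrow> w t \<omega>"
   and ae3: "AE \<omega> in M. (\<lambda>j. \<integral>t. z j t \<omega> \<partial>R) \<longlonglongrightarrow> (\<integral>t. w t \<omega> \<partial>R)"
   and lc: "continuous_on UNIV l" and Pc: "continuous_on UNIV \<Psi>"
  shows "Jc M T l \<Psi> x w \<le> liminf (\<lambda>j. Jc M T l \<Psi> x (z j))"
proof -
  note [measurable] = borel_measurable_continuous_onI[OF lc] borel_measurable_continuous_onI[OF Pc]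
  define F where "F f \<omega> = (\<integral>\<^sup>+t. ennreal (l (f t \<omega>)) \<partial>R) + ennreal (\<Psi> (x + (\<integral>t. f t \<omega> \<partial>R)))"
    for f :: "real \<Rightarrow> 'a \<Rightarrow> real" and \<omega>
  have Fm: "F (z j) \<in> borel_measurable M" for j
    using meas_F[OF HF_meas2[OF z] lc Pc] unfolding F_def .
  have pw: "AE \<omega> in M. F w \<omega> \<le> liminf (\<lambda>j. F (z j) \<omega>)"
    using ae2 ae3 AE_space
  proof eventually_elim
    case (elim \<omega>)
    have [measurable]: "(\<lambda>t. z j t \<omega>) \<in> borel_measurable R" for j
      using sec_meas[OF HF_meas[OF z]] elim by simp
    have "(\<integral>\<^sup>+t. ennreal (l (w t \<omega>)) \<partial>R) \<le> (\<integral>\<^sup>+t. liminf (\<lambda>j. ennreal (l (z j t \<omega>))) \<partial>R)"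
    proof (rule nn_integral_mono_AE)
      show "AE t in R. ennreal (l (w t \<omega>)) \<le> liminf (\<lambda>j. ennreal (l (z j t \<omega>)))"
        using elim(1)
      proof eventually_elim
        case (elim t)
        have "(\<lambda>j. ennreal (l (z j t \<omega>))) \<longlonglongrightarrow> ennreal (l (w t \<omega>))"
          by (intro tendsto_ennrealI isCont_tendsto_compose[OF isCont_of_con[OF lc]] elim)
        from lim_imp_Liminf[OF _ this] show ?case by simp
      qed
    qed
    also have "\<dots> \<le> liminf (\<lambda>j. \<integral>\<^sup>+t. ennreal (l (z j t \<omega>)) \<partial>R)"
      by (rule nn_integral_liminf) measurable
    finally have A: "(\<integral>\<^sup>+t. ennreal (l (w t \<omega>)) \<partial>R) \<le> liminf (\<lambda>j. \<integral>\<^sup>+t. ennreal (l (z j t \<omega>)) \<partial>R)" .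
    have "(\<lambda>j. ennreal (\<Psi> (x + (\<integral>t. z j t \<omega> \<partial>R)))) \<longlonglongrightarrow> ennreal (\<Psi> (x + (\<integral>t. w t \<omega> \<partial>R)))"
      by (intro tendsto_ennrealI isCont_tendsto_compose[OF isCont_of_con[OF Pc]] tendsto_add tendsto_const elim)
    from lim_imp_Liminf[OF _ this]
    have P: "ennreal (\<Psi> (x + (\<integral>t. w t \<omega> \<partial>R))) = liminf (\<lambda>j. ennreal (\<Psi> (x + (\<integral>t. z j t \<omega> \<partial>R))))"
      by simp
    have "F w \<omega> \<le> liminf (\<lambda>j. \<integral>\<^sup>+t. ennreal (l (z j t \<omega>)) \<partial>R) + liminf (\<lambda>j. ennreal (\<Psi> (x + (\<integral>t. z j t \<omega> \<partial>R))))"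
      unfolding F_def P by (rule add_right_mono[OF A])
    also have "\<dots> \<le> liminf (\<lambda>j. F (z j) \<omega>)"
      unfolding F_def by (rule liminf_add_ennreal)
    finally show ?case .
  qed
  have "Jc M T l \<Psi> x w = (\<integral>\<^sup>+\<omega>. F w \<omega> \<partial>M)" unfolding Jc_R F_def ..
  also have "\<dots> \<le> (\<integral>\<^sup>+\<omega>. liminf (\<lambda>j. F (z j) \<omega>) \<partial>M)" by (rule nn_integral_mono_AE[OF pw])
  also have "\<dots> \<le> liminf (\<lambda>j. \<integral>\<^sup>+\<omega>. F (z j) \<omega> \<partial>M)" by (rule nn_integral_liminf[OF Fm])
  also have "\<dots> = liminf (\<lambda>j. Jc M T l \<Psi> x (z j))" unfolding Jc_R F_def ..
  finally show ?thesis .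
qed

end

definition Jt :: "'a measure \<Rightarrow> real \<Rightarrow> nat \<Rightarrow> (real\<Rightarrow>real) \<Rightarrow> (real\<Rightarrow>real) \<Rightarrow> (nat \<Rightarrow> real) \<Rightarrow> (nat \<Rightarrow> real \<Rightarrow> 'a \<Rightarrow> real) \<Rightarrow> ennreal" where
  "Jt M T N l \<Psi> x0 v = ennreal (1 / real N) * (\<Sum>i<N. Jc M T l \<Psi> (x0 i) (v i))"

definition vmid :: "(nat \<Rightarrow> real \<Rightarrow> 'a \<Rightarrow> real) \<Rightarrow> (nat \<Rightarrow> real \<Rightarrow> 'a \<Rightarrow> real) \<Rightarrow> (nat \<Rightarrow> real \<Rightarrow> 'a \<Rightarrow> real)" where
  "vmid u w = (\<lambda>i t \<omega>. 1/2 * u i t \<omega> + 1/2 * w i t \<omega>)"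

definition Dn :: "'a measure \<Rightarrow> real \<Rightarrow> nat \<Rightarrow> (nat \<Rightarrow> real \<Rightarrow> 'a \<Rightarrow> real) \<Rightarrow> (nat \<Rightarrow> real \<Rightarrow> 'a \<Rightarrow> real) \<Rightarrow> ennreal" where
  "Dn M T N u w = (\<Sum>i<N. \<integral>\<^sup>+p. ennreal ((u i (fst p) (snd p) - w i (fst p) (snd p))\<^sup>2) \<partial>tP M T)"

definition Nn :: "'a measure \<Rightarrow> real \<Rightarrow> nat \<Rightarrow> (nat \<Rightarrow> real \<Rightarrow> 'a \<Rightarrow> real) \<Rightarrow> ennreal" where
  "Nn M T N u = (\<Sum>i<N. \<integral>\<^sup>+p. ennreal ((u i (fst p) (snd p))\<^sup>2) \<partial>tP M T)"

context setting begin

lemma adm_HF: "admissible M B T N Q v \<Longrightarrow> i < N \<Longrightarrow> v i \<in> HF M B T"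
  by (simp add: admissible_def)

lemma adm_mid:
  assumes u: "admissible M B T N Q u" and w: "admissible M B T N Q w"
  shows "admissible M B T N Q (vmid u w)"
proof -
  have "vmid u w i \<in> HF M B T" if "i < N" for i
  proof -
    have "vmid u w i = (\<lambda>t \<omega>. 1/2 * u i t \<omega> + 1/2 * w i t \<omega>)" by (simp only: vmid_def)
    thus ?thesis using HF_lin[OF adm_HF[OF u that] adm_HF[OF w that], of "1/2" "1/2"] by simp
  qed
  moreover have "AE p in tP M T. (1 / real N) * (\<Sum>i<N. vmid u w i (fst p) (snd p)) = Q (fst p) (snd p)"
    using u w unfolding admissible_def
  proof (elim conjE)
    assume a: "AE p in tP M T. 1 / real N * (\<Sum>i<N. u i (fst p) (snd p)) = Q (fst p) (snd p)"
      and b: "AE p in tP M T. 1 / real N * (\<Sum>i<N. w i (fst p) (snd p)) = Q (fst p) (snd p)"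
    show ?thesis using a b
    proof eventually_elim
      case (elim p)
      have "(\<Sum>i<N. vmid u w i (fst p) (snd p)) = 1/2 * (\<Sum>i<N. u i (fst p) (snd p)) + 1/2 * (\<Sum>i<N. w i (fst p) (snd p))"
        unfolding vmid_def by (simp add: sum.distrib sum_distrib_left)
      hence "(1 / real N) * (\<Sum>i<N. vmid u w i (fst p) (snd p))
          = 1/2 * (1 / real N * (\<Sum>i<N. u i (fst p) (snd p))) + 1/2 * (1 / real N * (\<Sum>i<N. w i (fst p) (snd p)))"
        by (simp add: algebra_simps)
      thus ?case using elim by simp
    qed
  qed
  ultimately show ?thesis unfolding admissible_def by auto
qed

lemma J_mid:
  assumes u: "admissible M B T N Q u" and w: "admissible M B T N Q w"
    and lc: "continuous_on UNIV l" and l0: "\<And>a. 0 \<le> l a"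
    and Pc: "continuous_on UNIV \<Psi>" and P0: "\<And>a. 0 \<le> \<Psi> a"
    and Pcv: "\<And>a b. 2 * \<Psi> (1/2*a + 1/2*b) \<le> \<Psi> a + \<Psi> b"
    and lcv: "\<And>a b. 2 * l (1/2*a + 1/2*b) + \<kappa> * (a-b)\<^sup>2 \<le> l a + l b" and k0: "0 \<le> \<kappa>"
  shows "2 * Jt M T N l \<Psi> x0 (vmid u w) + ennreal (1 / real N) * (ennreal \<kappa> * Dn M T N u w)
     \<le> Jt M T N l \<Psi> x0 u + Jt M T N l \<Psi> x0 w"
proof -
  let ?c = "ennreal (1 / real N)"
  have "(\<Sum>i<N. 2 * Jc M T l \<Psi> (x0 i) (vmid u w i) + ennreal \<kappa> * (\<integral>\<^sup>+p. ennreal ((u i (fst p) (snd p) - w i (fst p) (snd p))\<^sup>2) \<partial>tP M T))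
     \<le> (\<Sum>i<N. Jc M T l \<Psi> (x0 i) (u i) + Jc M T l \<Psi> (x0 i) (w i))"
  proof (rule sum_mono)
    fix i assume "i \<in> {..<N}"
    hence i: "i < N" by simp
    show "2 * Jc M T l \<Psi> (x0 i) (vmid u w i) + ennreal \<kappa> * (\<integral>\<^sup>+p. ennreal ((u i (fst p) (snd p) - w i (fst p) (snd p))\<^sup>2) \<partial>tP M T)
     \<le> Jc M T l \<Psi> (x0 i) (u i) + Jc M T l \<Psi> (x0 i) (w i)"
      using Jc_mid[OF adm_HF[OF u i] adm_HF[OF w i] lc l0 Pc P0 Pcv lcv k0, of "x0 i"]
      unfolding vmid_def by simp
  qed
  hence "?c * (\<Sum>i<N. 2 * Jc M T l \<Psi> (x0 i) (vmid u w i) + ennreal \<kappa> * (\<integral>\<^sup>+p. ennreal ((u i (fst p) (snd p) - w i (fst p) (snd p))\<^sup>2) \<partial>tP M T))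
     \<le> ?c * (\<Sum>i<N. Jc M T l \<Psi> (x0 i) (u i) + Jc M T l \<Psi> (x0 i) (w i))"
    by (rule mult_left_mono) simp
  thus ?thesis
    unfolding Jt_def Dn_def sum.distrib distrib_left sum_distrib_left[symmetric]
    by (simp add: ac_simps)
qed

end

lemma liminf_sum_ennreal:
  fixes f :: "'i \<Rightarrow> nat \<Rightarrow> ennreal"
  assumes "finite I"
  shows "(\<Sum>i\<in>I. liminf (f i)) \<le> liminf (\<lambda>n. \<Sum>i\<in>I. f i n)"
  using assms
proof (induction I rule: finite_induct)
  case empty then show ?case by simp
next
  case (insert x F)
  have "(\<Sum>i\<in>insert x F. liminf (f i)) = liminf (f x) + (\<Sum>i\<in>F. liminf (f i))"
    using insert by simp
  also have "\<dots> \<le> liminf (f x) + liminf (\<lambda>n. \<Sum>i\<in>F. f i n)"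
    by (intro add_left_mono insert.IH)
  also have "\<dots> \<le> liminf (\<lambda>n. f x n + (\<Sum>i\<in>F. f i n))"
    by (rule liminf_add_ennreal)
  also have "\<dots> = liminf (\<lambda>n. \<Sum>i\<in>insert x F. f i n)"
    using insert by simp
  finally show ?case .
qed

lemma le_of_eps:
  fixes x m :: ennreal
  assumes "\<And>n. x \<le> m + ennreal (1 / real (Suc n))"
  shows "x \<le> m"
proof -
  have "(\<lambda>n. m + ennreal (1 / real (Suc n))) \<longlonglongrightarrow> m + ennreal 0"
    by (intro tendsto_add tendsto_const tendsto_ennrealI LIMSEQ_inverse_real_of_nat[unfolded inverse_eq_divide])
  hence "(\<lambda>n. m + ennreal (1 / real (Suc n))) \<longlonglongrightarrow> m" by simp
  thus ?thesis by (rule LIMSEQ_le_const) (use assms in auto)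
qed

lemma NJ: "0 < N \<Longrightarrow> ennreal (real N) * Jt M T N l \<Psi> x0 v = (\<Sum>i<N. Jc M T l \<Psi> (x0 i) (v i))"
  unfolding Jt_def mult.assoc[symmetric]
  by (simp add: ennreal_mult[symmetric])

context setting begin

lemma parallelogram:
  assumes u: "admissible M B T N Q u" and w: "admissible M B T N Q w"
  shows "Dn M T N u w + 4 * Nn M T N (vmid u w) = 2 * Nn M T N u + 2 * Nn M T N w"
proof -
  have c: "(\<integral>\<^sup>+p. ennreal ((u i (fst p) (snd p) - w i (fst p) (snd p))\<^sup>2) \<partial>tP M T)
      + 4 * (\<integral>\<^sup>+p. ennreal ((vmid u w i (fst p) (snd p))\<^sup>2) \<partial>tP M T)
      = 2 * (\<integral>\<^sup>+p. ennreal ((u i (fst p) (snd p))\<^sup>2) \<partial>tP M T) + 2 * (\<integral>\<^sup>+p. ennreal ((w i (fst p) (snd p))\<^sup>2) \<partial>tP M T)"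
    if i: "i < N" for i
  proof -
    note [measurable] = HF_meas2[OF adm_HF[OF u i]] HF_meas2[OF adm_HF[OF w i]]
    have "(\<integral>\<^sup>+p. ennreal ((u i (fst p) (snd p) - w i (fst p) (snd p))\<^sup>2) \<partial>tP M T)
      + 4 * (\<integral>\<^sup>+p. ennreal ((vmid u w i (fst p) (snd p))\<^sup>2) \<partial>tP M T)
      = (\<integral>\<^sup>+p. ennreal ((u i (fst p) (snd p) - w i (fst p) (snd p))\<^sup>2) + 4 * ennreal ((vmid u w i (fst p) (snd p))\<^sup>2) \<partial>tP M T)"
      unfolding vmid_def by (simp add: nn_integral_add nn_integral_cmult)
    also have "\<dots> = (\<integral>\<^sup>+p. 2 * ennreal ((u i (fst p) (snd p))\<^sup>2) + 2 * ennreal ((w i (fst p) (snd p))\<^sup>2) \<partial>tP M T)"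
    proof (intro nn_integral_cong)
      fix p
      define a where "a = u i (fst p) (snd p)"
      define b where "b = w i (fst p) (snd p)"
      have e: "(a - b)\<^sup>2 + 4 * (1/2*a + 1/2*b)\<^sup>2 = 2 * a\<^sup>2 + 2 * b\<^sup>2"
        by (simp add: power2_eq_square algebra_simps)
      have f4: "ennreal (4 * (1/2*a + 1/2*b)\<^sup>2) = 4 * ennreal ((1/2*a + 1/2*b)\<^sup>2)"
        using ennreal_mult[of 4 "(1/2*a + 1/2*b)\<^sup>2"] by simp
      have "ennreal ((a - b)\<^sup>2 + 4 * (1/2*a + 1/2*b)\<^sup>2) = ennreal ((a - b)\<^sup>2) + ennreal (4 * (1/2*a + 1/2*b)\<^sup>2)"
        by (rule ennreal_plus) auto
      hence "ennreal ((a - b)\<^sup>2) + 4 * ennreal ((1/2*a + 1/2*b)\<^sup>2) = ennreal ((a - b)\<^sup>2 + 4 * (1/2*a + 1/2*b)\<^sup>2)"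
        unfolding f4 by simp
      also have "\<dots> = ennreal (2 * a\<^sup>2 + 2 * b\<^sup>2)" unfolding e ..
      also have "\<dots> = 2 * ennreal (a\<^sup>2) + 2 * ennreal (b\<^sup>2)"
      proof -
        have "ennreal (2 * a\<^sup>2 + 2 * b\<^sup>2) = ennreal (2 * a\<^sup>2) + ennreal (2 * b\<^sup>2)"
          by (rule ennreal_plus) auto
        moreover have "ennreal (2 * a\<^sup>2) = 2 * ennreal (a\<^sup>2)" using ennreal_mult[of 2 "a\<^sup>2"] by simp
        moreover have "ennreal (2 * b\<^sup>2) = 2 * ennreal (b\<^sup>2)" using ennreal_mult[of 2 "b\<^sup>2"] by simp
        ultimately show ?thesis by simp
      qed
      finally show "ennreal ((u i (fst p) (snd p) - w i (fst p) (snd p))\<^sup>2) + 4 * ennreal ((vmid u w i (fst p) (snd p))\<^sup>2)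
          = 2 * ennreal ((u i (fst p) (snd p))\<^sup>2) + 2 * ennreal ((w i (fst p) (snd p))\<^sup>2)"
        unfolding a_def b_def vmid_def by simp
    qed
    also have "\<dots> = 2 * (\<integral>\<^sup>+p. ennreal ((u i (fst p) (snd p))\<^sup>2) \<partial>tP M T) + 2 * (\<integral>\<^sup>+p. ennreal ((w i (fst p) (snd p))\<^sup>2) \<partial>tP M T)"
      by (simp add: nn_integral_add nn_integral_cmult)
    finally show ?thesis .
  qed
  show ?thesis
    unfolding Dn_def Nn_def sum_distrib_left sum.distrib[symmetric]
    by (rule sum.cong) (auto simp: c)
qed

lemma Jt_lower:
  assumes w: "admissible M B T N Q w" and N: "0 < N"
    and lc: "continuous_on UNIV l" and Pc: "continuous_on UNIV \<Psi>"
    and l0: "\<And>a. 0 \<le> l a" and P0: "\<And>a. 0 \<le> \<Psi> a"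
    and co: "\<And>a. \<alpha> * a\<^sup>2 - \<beta> \<le> l a" and a0: "0 \<le> \<alpha>" and b0: "0 \<le> \<beta>"
  shows "ennreal \<alpha> * Nn M T N w \<le> ennreal (real N) * Jt M T N l \<Psi> x0 w + ennreal (real N * \<beta> * T)"
proof -
  have "ennreal \<alpha> * Nn M T N w \<le> (\<Sum>i<N. Jc M T l \<Psi> (x0 i) (w i) + ennreal (\<beta> * T))"
    unfolding Nn_def sum_distrib_left
    by (intro sum_mono Jc_lower[OF adm_HF[OF w] lc Pc l0 P0 co a0 b0]) auto
  also have "\<dots> = ennreal (real N) * Jt M T N l \<Psi> x0 w + ennreal (real N * \<beta> * T)"
    unfolding sum.distrib NJ[OF N] using b0 Tpos
    by (simp add: ennreal_mult ennreal_of_nat_eq_real_of_nat mult.assoc)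
  finally show ?thesis .
qed

end

context setting begin

lemma Q_adm:
  assumes N: "0 < N" and Q: "Q \<in> HF M B T"
  shows "admissible M B T N Q (\<lambda>i. Q)"
  unfolding admissible_def using Q N by simp

lemma conv_helper:
  fixes X :: ennreal and a e Dr :: real
  assumes h: "X + 4 * ennreal a \<le> 2 * (ennreal a + ennreal e) + 2 * (ennreal Dr + ennreal e)"
    and a0: "0 \<le> a" and e0: "0 \<le> e" and D0: "0 \<le> Dr"
  shows "X \<le> ennreal (2 * (Dr - a) + 4 * e)"
proof -
  have r: "2 * (ennreal a + ennreal e) + 2 * (ennreal Dr + ennreal e) = ennreal (2*a + 2*Dr + 4*e)"
  proof -
    have e1: "2*a + 2*Dr + 4*e = 2*(a+e) + 2*(Dr+e)" by simp
    have "ennreal (2*(a+e) + 2*(Dr+e)) = ennreal (2*(a+e)) + ennreal (2*(Dr+e))"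
      by (rule ennreal_plus) (use a0 e0 D0 in auto)
    moreover have "ennreal (2*(a+e)) = 2 * (ennreal a + ennreal e)"
      using ennreal_mult[of 2 "a+e"] a0 e0 by simp
    moreover have "ennreal (2*(Dr+e)) = 2 * (ennreal Dr + ennreal e)"
      using ennreal_mult[of 2 "Dr+e"] D0 e0 by simp
    ultimately show ?thesis unfolding e1 by simp
  qed
  have "X \<noteq> \<infinity>" using h unfolding r by (auto simp: top_unique)
  then obtain x where x: "X = ennreal x" "0 \<le> x" by (cases X) auto
  have l: "X + 4 * ennreal a = ennreal (x + 4 * a)"
  proof -
    have "ennreal (x + 4 * a) = ennreal x + ennreal (4 * a)" by (rule ennreal_plus) (use x a0 in auto)
    moreover have "ennreal (4 * a) = 4 * ennreal a" using ennreal_mult[of 4 a] a0 by simp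
    ultimately show ?thesis using x by simp
  qed
  have "ennreal (x + 4 * a) \<le> ennreal (2*a + 2*Dr + 4*e)" using h unfolding r l .
  hence "x + 4 * a \<le> 2*a + 2*Dr + 4*e" using a0 e0 D0 by (subst (asm) ennreal_le_iff) auto
  hence "x \<le> 2 * (Dr - a) + 4 * e" by simp
  thus ?thesis unfolding x by (rule ennreal_leI)
qed

lemma exist_min:
  assumes N: "0 < N" and Q: "Q \<in> HF M B T"
    and lc: "continuous_on UNIV l" and l0: "\<And>a. 0 \<le> l a"
    and lb: "\<And>a. l a \<le> b * (1 + \<bar>a\<bar>\<^sup>2)" and b0: "0 \<le> b"
    and co: "\<And>a. \<alpha> * a\<^sup>2 - \<beta> \<le> l a" and a0: "0 < \<alpha>" and be0: "0 \<le> \<beta>"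
    and lcv: "\<And>a c. 2 * l (1/2*a + 1/2*c) + 0 * (a-c)\<^sup>2 \<le> l a + l c"
    and Pc: "continuous_on UNIV \<Psi>" and P0: "\<And>a. 0 \<le> \<Psi> a"
    and Pb: "\<And>a. \<Psi> a \<le> C * (1 + \<bar>a\<bar>\<^sup>2)" and C0: "0 \<le> C"
    and Pcv: "\<And>a c. 2 * \<Psi> (1/2*a + 1/2*c) \<le> \<Psi> a + \<Psi> c"
  shows "(INF w\<in>{w. admissible M B T N Q w}. Jt M T N l \<Psi> x0 w) < \<infinity>"
    "\<exists>vs. admissible M B T N Q vs \<and> Jt M T N l \<Psi> x0 vs = (INF w\<in>{w. admissible M B T N Q w}. Jt M T N l \<Psi> x0 w)"
proof -
  define A where "A = {w. admissible M B T N Q w}"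
  define J where "J = Jt M T N l \<Psi> x0"
  define m where "m = (INF w\<in>A. J w)"
  have qA: "(\<lambda>i. Q) \<in> A" unfolding A_def using Q_adm[OF N Q] by simp
  have "J (\<lambda>i. Q) < \<infinity>"
    unfolding J_def Jt_def
    using Jc_finite[OF Q lc Pc l0 P0 lb Pb b0 C0] by (simp add: ennreal_mult_less_top)
  moreover have "m \<le> J (\<lambda>i. Q)" unfolding m_def by (rule INF_lower[OF qA])
  ultimately have mfin: "m < \<infinity>" by simp
  thus "(INF w\<in>{w. admissible M B T N Q w}. Jt M T N l \<Psi> x0 w) < \<infinity>" unfolding m_def A_def J_def .
  define mr where "mr = enn2real m"
  have m_eq: "m = ennreal mr" unfolding mr_def using mfin by (simp add: less_top)
  have mr0: "0 \<le> mr" unfolding mr_def by simp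
  define \<epsilon> where "\<epsilon> n = 1 / real (Suc n)" for n
  have \<epsilon>0: "0 < \<epsilon> n" for n unfolding \<epsilon>_def by simp
  have \<epsilon>1: "\<epsilon> n \<le> 1" for n unfolding \<epsilon>_def by simp
  have \<epsilon>mono: "n \<le> k \<Longrightarrow> \<epsilon> k \<le> \<epsilon> n" for n k unfolding \<epsilon>_def by (simp add: frac_le)
  define Cs where "Cs n = {w\<in>A. J w \<le> m + ennreal (\<epsilon> n)}" for n
  have Cne: "\<exists>w. w \<in> Cs n" for n
  proof -
    have "m < m + ennreal (\<epsilon> n)" using mfin \<epsilon>0[of n]
      using ennreal_add_left_cancel_less[of m 0 "ennreal (\<epsilon> n)"] by (simp add: less_top)
    then obtain w where "w \<in> A" "J w < m + ennreal (\<epsilon> n)" unfolding m_def by (auto simp: INF_less_iff)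
    thus ?thesis unfolding Cs_def by (intro exI[of _ w]) auto
  qed
  have Cmono: "Cs k \<subseteq> Cs n" if n: "n \<le> k" for n k
  proof
    fix w assume "w \<in> Cs k"
    hence wA: "w \<in> A" and a: "J w \<le> m + ennreal (\<epsilon> k)" unfolding Cs_def by auto
    have b: "m + ennreal (\<epsilon> k) \<le> m + ennreal (\<epsilon> n)" by (intro add_left_mono ennreal_leI \<epsilon>mono n)
    have "J w \<le> m + ennreal (\<epsilon> n)" using a b by (rule order_trans)
    thus "w \<in> Cs n" using wA unfolding Cs_def by simp
  qed
  define K1 where "K1 = (real N * (mr + 1) + real N * \<beta> * T) / \<alpha>"
  have Nbound: "Nn M T N w \<le> ennreal K1" if "w \<in> Cs n" for w n
  proof -
    have wA: "admissible M B T N Q w" and Jw: "J w \<le> m + ennreal (\<epsilon> n)" using that unfolding Cs_def A_def by auto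
    have "J w \<le> ennreal (mr + 1)" using Jw \<epsilon>1[of n] mr0 unfolding m_eq
      by (metis ennreal_leI ennreal_plus add_left_mono order_trans zero_le_one order_less_imp_le \<epsilon>0)
    hence "ennreal (real N) * J w \<le> ennreal (real N) * ennreal (mr + 1)" by (rule mult_left_mono) simp
    hence "ennreal \<alpha> * Nn M T N w \<le> ennreal (real N) * ennreal (mr + 1) + ennreal (real N * \<beta> * T)"
      using Jt_lower[OF wA N lc Pc l0 P0 co _ be0, of x0] a0 unfolding J_def
      by (meson add_right_mono order_less_imp_le order_trans)
    also have "\<dots> = ennreal (real N * (mr + 1) + real N * \<beta> * T)"
      using mr0 be0 Tpos by (simp add: ennreal_mult)
    finally have h: "ennreal \<alpha> * Nn M T N w \<le> ennreal (real N * (mr + 1) + real N * \<beta> * T)" .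
    have "Nn M T N w = ennreal (1/\<alpha>) * (ennreal \<alpha> * Nn M T N w)"
      using a0 by (simp add: mult.assoc[symmetric] ennreal_mult[symmetric])
    also have "\<dots> \<le> ennreal (1/\<alpha>) * ennreal (real N * (mr + 1) + real N * \<beta> * T)"
      by (rule mult_left_mono[OF h]) simp
    also have "\<dots> = ennreal K1"
    proof -
      have X0: "0 \<le> real N * (mr + 1) + real N * \<beta> * T" using mr0 be0 Tpos by simp
      show ?thesis unfolding K1_def using ennreal_mult[OF _ X0, of "1/\<alpha>"] a0 by simp
    qed
    finally show ?thesis .
  qed
  define d where "d n = (INF w\<in>Cs n. Nn M T N w)" for n
  have dle: "d n \<le> Nn M T N w" if "w \<in> Cs n" for n w unfolding d_def by (rule INF_lower[OF that])
  have dK: "d n \<le> ennreal K1" for n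
  proof -
    obtain w where "w \<in> Cs n" using Cne by blast
    thus ?thesis using dle Nbound order_trans by blast
  qed
  have dinc: "incseq d" unfolding incseq_def d_def by (auto intro!: INF_superset_mono Cmono)
  have Wex: "\<exists>w. w \<in> Cs n \<and> Nn M T N w \<le> d n + ennreal (\<epsilon> n)" for n
  proof -
    have "d n \<noteq> \<infinity>" using dK[of n] by (auto simp: top_unique)
    hence "d n < d n + ennreal (\<epsilon> n)" using \<epsilon>0[of n]
      using ennreal_add_left_cancel_less[of "d n" 0 "ennreal (\<epsilon> n)"] by simp
    then obtain w where "w \<in> Cs n" "Nn M T N w < d n + ennreal (\<epsilon> n)" unfolding d_def[of n] by (auto simp: INF_less_iff)
    thus ?thesis by (intro exI[of _ w]) auto
  qed
  obtain W where W: "\<And>n. W n \<in> Cs n" "\<And>n. Nn M T N (W n) \<le> d n + ennreal (\<epsilon> n)"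
    using Wex by metis
  have WA: "admissible M B T N Q (W n)" for n using W(1)[of n] unfolding Cs_def A_def by auto
  have JW: "J (W n) \<le> m + ennreal (\<epsilon> n)" for n using W(1)[of n] unfolding Cs_def by auto
  define D where "D = (SUP n. d n)"
  have dD: "d n \<le> D" for n unfolding D_def by (rule SUP_upper) simp
  have DK: "D \<le> ennreal K1" unfolding D_def by (rule SUP_least) (rule dK)
  have Dfin: "D \<noteq> \<infinity>" using DK by (auto simp: top_unique)
  have dfin: "d n \<noteq> \<infinity>" for n using dK[of n] by (auto simp: top_unique)
  define Dr where "Dr = enn2real D"
  define dr where "dr n = enn2real (d n)" for n
  have D_eq: "D = ennreal Dr" unfolding Dr_def using Dfin by (simp add: less_top)
  have d_eq: "d n = ennreal (dr n)" for n unfolding dr_def using dfin[of n] by (simp add: less_top)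
  have key: "Dn M T N (W n) (W k) \<le> ennreal (2 * (Dr - dr n) + 4 * \<epsilon> n)" if nk: "n \<le> k" for n k
  proof -
    let ?mid = "vmid (W n) (W k)"
    have midA: "admissible M B T N Q ?mid" by (rule adm_mid[OF WA WA])
    have "2 * J ?mid + ennreal (1 / real N) * (ennreal 0 * Dn M T N (W n) (W k)) \<le> J (W n) + J (W k)"
      unfolding J_def by (rule J_mid[OF WA WA lc l0 Pc P0 Pcv lcv]) simp
    hence "2 * J ?mid \<le> J (W n) + J (W k)" by simp
    also have "\<dots> \<le> (m + ennreal (\<epsilon> n)) + (m + ennreal (\<epsilon> n))"
      using JW[of n] JW[of k] add_left_mono[OF ennreal_leI[OF \<epsilon>mono[OF nk]], of m]
      by (meson add_mono order_trans)
    also have "\<dots> = 2 * (m + ennreal (\<epsilon> n))" by (simp add: mult_2)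
    finally have h2: "2 * J ?mid \<le> 2 * (m + ennreal (\<epsilon> n))" .
    have "J ?mid \<le> m + ennreal (\<epsilon> n)"
      using h2 ennreal_mult_le_mult_iff[of 2 "J ?mid" "m + ennreal (\<epsilon> n)"] by (simp only: ) simp
    hence "?mid \<in> Cs n" unfolding Cs_def A_def using midA by simp
    hence dm: "d n \<le> Nn M T N ?mid" by (rule dle)
    have "Dn M T N (W n) (W k) + 4 * ennreal (dr n) \<le> Dn M T N (W n) (W k) + 4 * Nn M T N ?mid"
      unfolding d_eq[symmetric] using dm by (intro add_left_mono mult_left_mono) auto
    also have "\<dots> = 2 * Nn M T N (W n) + 2 * Nn M T N (W k)" by (rule parallelogram[OF WA WA])
    also have "\<dots> \<le> 2 * (ennreal (dr n) + ennreal (\<epsilon> n)) + 2 * (ennreal Dr + ennreal (\<epsilon> n))"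
    proof (intro add_mono mult_left_mono)
      show "Nn M T N (W n) \<le> ennreal (dr n) + ennreal (\<epsilon> n)" using W(2)[of n] unfolding d_eq .
      have "Nn M T N (W k) \<le> d k + ennreal (\<epsilon> k)" by (rule W(2))
      also have "\<dots> \<le> D + ennreal (\<epsilon> n)" by (intro add_mono dD ennreal_leI \<epsilon>mono nk)
      finally show "Nn M T N (W k) \<le> ennreal Dr + ennreal (\<epsilon> n)" unfolding D_eq .
    qed auto
    finally show ?thesis
      by (rule conv_helper) (use \<epsilon>0[of n] in \<open>auto simp: dr_def Dr_def\<close>)
  qed
  have dconv: "dr \<longlonglongrightarrow> Dr"
  proof -
    have "d \<longlonglongrightarrow> D" unfolding D_def by (rule LIMSEQ_SUP[OF dinc])
    hence "d \<longlonglongrightarrow> ennreal Dr" unfolding D_eq .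
    from tendsto_enn2real[OF this] show ?thesis unfolding dr_def[abs_def] Dr_def by simp
  qed
  have econv: "\<epsilon> \<longlonglongrightarrow> 0"
    unfolding \<epsilon>_def[abs_def] by (rule LIMSEQ_inverse_real_of_nat[unfolded inverse_eq_divide])
  have gconv: "(\<lambda>n. 2 * (Dr - dr n) + 4 * \<epsilon> n) \<longlonglongrightarrow> 0"
  proof -
    have "(\<lambda>n. 2 * (Dr - dr n) + 4 * \<epsilon> n) \<longlonglongrightarrow> 2 * (Dr - Dr) + 4 * 0"
      by (intro tendsto_intros dconv econv)
    thus ?thesis by simp
  qed
  have n0ex: "\<exists>n0. \<forall>n k. n0 \<le> n \<longrightarrow> n \<le> k \<longrightarrow> Dn M T N (W n) (W k) \<le> ennreal ((1/4)^j)" for j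
  proof -
    have "eventually (\<lambda>n. 2 * (Dr - dr n) + 4 * \<epsilon> n < (1/4)^j) sequentially"
      by (rule order_tendstoD(2)[OF gconv]) simp
    then obtain n0 where n0: "\<And>n. n0 \<le> n \<Longrightarrow> 2 * (Dr - dr n) + 4 * \<epsilon> n < (1/4)^j"
      unfolding eventually_sequentially by blast
    show ?thesis
    proof (intro exI[of _ n0] allI impI)
      fix n k assume "n0 \<le> n" "n \<le> k"
      thus "Dn M T N (W n) (W k) \<le> ennreal ((1/4)^j)"
        using key[of n k] n0[of n] by (meson ennreal_leI less_imp_le order_trans)
    qed
  qed
  obtain n0 where n0: "\<And>j n k. n0 j \<le> n \<Longrightarrow> n \<le> k \<Longrightarrow> Dn M T N (W n) (W k) \<le> ennreal ((1/4)^j)"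
    using n0ex by metis
  define r where "r j = (\<Sum>i\<le>j. n0 i) + j" for j
  have r1: "n0 j \<le> r j" for j unfolding r_def
    using member_le_sum[of j "{..j}" n0] by simp
  have r2: "r j \<le> r (Suc j)" for j unfolding r_def by simp
  have r3: "j \<le> r j" for j unfolding r_def by simp
  define z where "z j = W (r j)" for j
  have zA: "admissible M B T N Q (z j)" for j unfolding z_def by (rule WA)
  have zJ: "J (z j) \<le> m + ennreal (\<epsilon> j)" for j
    using JW[of "r j"] add_left_mono[OF ennreal_leI[OF \<epsilon>mono[OF r3[of j]]], of m]
    unfolding z_def by (rule order_trans)
  have zN: "Nn M T N (z j) \<le> ennreal K1" for j unfolding z_def by (rule Nbound[OF W(1)])
  have zD: "Dn M T N (z j) (z (Suc j)) \<le> ennreal ((1/4)^j)" for j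
    unfolding z_def by (rule n0[OF r1 r2])
  have ziHF: "z j i \<in> HF M B T" if "i < N" for i j by (rule adm_HF[OF zA that])
  have dzi: "(\<integral>\<^sup>+p. ennreal ((z (Suc j) i (fst p) (snd p) - z j i (fst p) (snd p))\<^sup>2) \<partial>tP M T) \<le> ennreal ((1/4)^j)"
    if i: "i < N" for i j
  proof -
    have "(\<integral>\<^sup>+p. ennreal ((z (Suc j) i (fst p) (snd p) - z j i (fst p) (snd p))\<^sup>2) \<partial>tP M T)
        = (\<integral>\<^sup>+p. ennreal ((z j i (fst p) (snd p) - z (Suc j) i (fst p) (snd p))\<^sup>2) \<partial>tP M T)"
      by (simp add: power2_commute)
    also have "\<dots> \<le> Dn M T N (z j) (z (Suc j))" unfolding Dn_def
      by (rule member_le_sum[of i "{..<N}" "\<lambda>i. \<integral>\<^sup>+p. ennreal ((z j i (fst p) (snd p) - z (Suc j) i (fst p) (snd p))\<^sup>2) \<partial>tP M T"])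
         (use i in auto)
    also have "\<dots> \<le> ennreal ((1/4)^j)" by (rule zD)
    finally show ?thesis .
  qed
  have zib: "(\<integral>\<^sup>+p. ennreal ((z j i (fst p) (snd p))\<^sup>2) \<partial>tP M T) \<le> ennreal K1" if i: "i < N" for i j
  proof -
    have "(\<integral>\<^sup>+p. ennreal ((z j i (fst p) (snd p))\<^sup>2) \<partial>tP M T) \<le> Nn M T N (z j)" unfolding Nn_def
      by (rule member_le_sum[of i "{..<N}" "\<lambda>i. \<integral>\<^sup>+p. ennreal ((z j i (fst p) (snd p))\<^sup>2) \<partial>tP M T"])
         (use i in auto)
    also have "\<dots> \<le> ennreal K1" by (rule zN)
    finally show ?thesis .
  qed
  define w where "w i t \<omega> = lim (\<lambda>j. z j i t \<omega>)" for i t \<omega>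
  note LP = limit_props[of "\<lambda>j. z j i" for i, OF ziHF dzi]
  have wHF: "w i \<in> HF M B T" if i: "i < N" for i
    unfolding w_def using limit_HF[of "\<lambda>j. z j i", OF ziHF[OF i] LP(1)[OF i] zib[OF i]] i by simp
  have wA: "admissible M B T N Q w"
  proof -
    have ae1: "AE p in tP M T. \<forall>i\<in>{..<N}. (\<lambda>j. z j i (fst p) (snd p)) \<longlonglongrightarrow> w i (fst p) (snd p)"
      unfolding w_def by (rule AE_ball_countable') (use LP(1) in auto)
    have ae2: "AE p in tP M T. \<forall>j. 1 / real N * (\<Sum>i<N. z j i (fst p) (snd p)) = Q (fst p) (snd p)"
      unfolding AE_all_countable using zA unfolding admissible_def by auto
    have "AE p in tP M T. 1 / real N * (\<Sum>i<N. w i (fst p) (snd p)) = Q (fst p) (snd p)"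
      using ae1 ae2
    proof eventually_elim
      case (elim p)
      have "(\<lambda>j. 1 / real N * (\<Sum>i<N. z j i (fst p) (snd p))) \<longlonglongrightarrow> 1 / real N * (\<Sum>i<N. w i (fst p) (snd p))"
        using elim(1) by (intro tendsto_mult_left tendsto_sum) auto
      moreover have "(\<lambda>j. 1 / real N * (\<Sum>i<N. z j i (fst p) (snd p))) = (\<lambda>j. Q (fst p) (snd p))"
        using elim(2) by simp
      ultimately show ?case using LIMSEQ_unique tendsto_const by metis
    qed
    thus ?thesis unfolding admissible_def using wHF by auto
  qed
  have lsc: "Jc M T l \<Psi> (x0 i) (w i) \<le> liminf (\<lambda>j. Jc M T l \<Psi> (x0 i) (z j i))" if i: "i < N" for i
    by (rule Jc_lsc[OF ziHF[OF i] wHF[OF i] _ _ lc Pc])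
       (use LP(2)[OF i] LP(3)[OF i] i in \<open>simp_all add: w_def\<close>)
  have Nne: "ennreal (real N) \<noteq> 0" "ennreal (real N) \<noteq> \<top>" using N by auto
  have Jw: "J w \<le> m + ennreal (\<epsilon> n0')" for n0'
  proof -
    have "ennreal (real N) * J w = (\<Sum>i<N. Jc M T l \<Psi> (x0 i) (w i))" unfolding J_def by (rule NJ[OF N])
    also have "\<dots> \<le> (\<Sum>i<N. liminf (\<lambda>j. Jc M T l \<Psi> (x0 i) (z j i)))" by (intro sum_mono lsc) auto
    also have "\<dots> \<le> liminf (\<lambda>j. \<Sum>i<N. Jc M T l \<Psi> (x0 i) (z j i))" by (rule liminf_sum_ennreal) simp
    also have "\<dots> \<le> limsup (\<lambda>j. \<Sum>i<N. Jc M T l \<Psi> (x0 i) (z j i))" by (rule Liminf_le_Limsup) simp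
    also have "\<dots> \<le> ennreal (real N) * (m + ennreal (\<epsilon> n0'))"
    proof (rule Limsup_bounded)
      show "eventually (\<lambda>j. (\<Sum>i<N. Jc M T l \<Psi> (x0 i) (z j i)) \<le> ennreal (real N) * (m + ennreal (\<epsilon> n0'))) sequentially"
        unfolding eventually_sequentially
      proof (intro exI[of _ n0'] allI impI)
        fix j assume "n0' \<le> j"
        have "(\<Sum>i<N. Jc M T l \<Psi> (x0 i) (z j i)) = ennreal (real N) * J (z j)"
          unfolding J_def by (rule NJ[OF N, symmetric])
        also have "\<dots> \<le> ennreal (real N) * (m + ennreal (\<epsilon> n0'))"
          using order_trans[OF zJ[of j] add_left_mono[OF ennreal_leI[OF \<epsilon>mono[OF \<open>n0' \<le> j\<close>]], of m]]
          by (intro mult_left_mono) auto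
        finally show "(\<Sum>i<N. Jc M T l \<Psi> (x0 i) (z j i)) \<le> ennreal (real N) * (m + ennreal (\<epsilon> n0'))" .
      qed
    qed
    finally show ?thesis using ennreal_mult_le_mult_iff[OF Nne] by simp
  qed
  have "J w \<le> m" by (rule le_of_eps) (use Jw in \<open>simp add: \<epsilon>_def\<close>)
  moreover have "m \<le> J w" unfolding m_def using wA unfolding A_def by (intro INF_lower) simp
  ultimately have "J w = m" by simp
  thus "\<exists>vs. admissible M B T N Q vs \<and> Jt M T N l \<Psi> x0 vs = (INF w\<in>{w. admissible M B T N Q w}. Jt M T N l \<Psi> x0 w)"
    using wA unfolding m_def A_def J_def by blast
qed

end

context setting begin

lemma unique_min:
  assumes N: "0 < N"
    and lc: "continuous_on UNIV l" and l0: "\<And>a. 0 \<le> l a"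
    and Pc: "continuous_on UNIV \<Psi>" and P0: "\<And>a. 0 \<le> \<Psi> a"
    and Pcv: "\<And>a c. 2 * \<Psi> (1/2*a + 1/2*c) \<le> \<Psi> a + \<Psi> c"
    and lcv: "\<And>a c. 2 * l (1/2*a + 1/2*c) + \<kappa> * (a-c)\<^sup>2 \<le> l a + l c" and k0: "0 < \<kappa>"
    and u: "admissible M B T N Q u" and w: "admissible M B T N Q w"
    and Ju: "Jt M T N l \<Psi> x0 u = (INF v\<in>{v. admissible M B T N Q v}. Jt M T N l \<Psi> x0 v)"
    and Jw: "Jt M T N l \<Psi> x0 w = Jt M T N l \<Psi> x0 u"
    and mfin: "(INF v\<in>{v. admissible M B T N Q v}. Jt M T N l \<Psi> x0 v) < \<infinity>"
  shows "\<forall>i<N. AE p in tP M T. w i (fst p) (snd p) = u i (fst p) (snd p)"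
proof -
  define m where "m = (INF v\<in>{v. admissible M B T N Q v}. Jt M T N l \<Psi> x0 v)"
  have midA: "admissible M B T N Q (vmid u w)" by (rule adm_mid[OF u w])
  have "m \<le> Jt M T N l \<Psi> x0 (vmid u w)" unfolding m_def using midA by (intro INF_lower) simp
  hence "2 * m + ennreal (1 / real N) * (ennreal \<kappa> * Dn M T N u w)
      \<le> 2 * Jt M T N l \<Psi> x0 (vmid u w) + ennreal (1 / real N) * (ennreal \<kappa> * Dn M T N u w)"
    by (intro add_right_mono mult_left_mono) auto
  also have "\<dots> \<le> Jt M T N l \<Psi> x0 u + Jt M T N l \<Psi> x0 w"
    by (rule J_mid[OF u w lc l0 Pc P0 Pcv lcv]) (use k0 in simp)
  also have "\<dots> = 2 * m + 0" using Ju Jw unfolding m_def by (simp add: mult_2)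
  finally have "ennreal (1 / real N) * (ennreal \<kappa> * Dn M T N u w) \<le> 0"
    using mfin unfolding m_def[symmetric] ennreal_add_left_cancel_le
    by (auto simp: ennreal_mult_less_top ennreal_mult_eq_top_iff)
  hence D0: "Dn M T N u w = 0" using N k0 by simp
  show ?thesis
  proof (intro allI impI)
    fix i assume i: "i < N"
    note [measurable] = HF_meas2[OF adm_HF[OF u i]] HF_meas2[OF adm_HF[OF w i]]
    have "(\<integral>\<^sup>+p. ennreal ((u i (fst p) (snd p) - w i (fst p) (snd p))\<^sup>2) \<partial>tP M T) = 0"
      using D0 i unfolding Dn_def by (simp add: sum_eq_0_iff)
    hence "AE p in tP M T. ennreal ((u i (fst p) (snd p) - w i (fst p) (snd p))\<^sup>2) = 0"
      by (subst (asm) nn_integral_0_iff_AE) auto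
    thus "AE p in tP M T. w i (fst p) (snd p) = u i (fst p) (snd p)"
      by eventually_elim simp
  qed
qed

end

theorem proposition4p1:
  fixes M :: "'a measure" and B :: "real \<Rightarrow> 'a \<Rightarrow> real" and T :: real and N :: nat
    and Q :: "real \<Rightarrow> 'a \<Rightarrow> real" and x0 :: "nat \<Rightarrow> real"
    and L Lx Lv :: "real \<Rightarrow> real \<Rightarrow> real" and \<Psi> \<Psi>' :: "real \<Rightarrow> real"
  assumes BM: "brownian_motion M T B"
    and N: "0 < N"
    and Q: "Q \<in> HF M B T"
    and L_deriv: "\<And>p. ((\<lambda>q. L (fst q) (snd q)) has_derivative
                     (\<lambda>h. Lx (fst p) (snd p) * fst h + Lv (fst p) (snd p) * snd h)) (at p)"
    and Lx_cont: "continuous_on UNIV (\<lambda>p. Lx (fst p) (snd p))"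
    and Lv_cont: "continuous_on UNIV (\<lambda>p. Lv (fst p) (snd p))"
    and L_nonneg: "\<And>x v. 0 \<le> L x v"
    and L_convex: "convex_on UNIV (\<lambda>p. L (fst p) (snd p))"
    and Psi_deriv: "\<And>x. (\<Psi> has_real_derivative \<Psi>' x) (at x)"
    and Psi'_cont: "continuous_on UNIV \<Psi>'"
    and Psi_nonneg: "\<And>x. 0 \<le> \<Psi> x"
    and Psi_convex: "convex_on UNIV \<Psi>"
    and Psi_growth: "\<exists>C Ct. 0 < C \<and> 0 < Ct \<and>
        (\<forall>x. \<Psi> x \<le> C * (1 + \<bar>x\<bar>\<^sup>2) \<and> \<bar>\<Psi>' x\<bar> \<le> Ct * (1 + \<bar>x\<bar>))"
    and L_growth: "\<exists>\<beta>t C. 0 < \<beta>t \<and> 0 < C \<and>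
        (\<forall>x v. L x v \<le> \<beta>t * (1 + \<bar>v\<bar>\<^sup>2) \<and> \<bar>Lx x v\<bar> \<le> C * (1 + \<bar>v\<bar>)
               \<and> \<bar>Lv x v\<bar> \<le> C * (1 + \<bar>v\<bar>))"
    and L_coercive: "\<exists>\<alpha> \<beta>. 0 < \<alpha> \<and> 0 \<le> \<beta> \<and> (\<forall>x v. \<alpha> * \<bar>v\<bar>\<^sup>2 - \<beta> \<le> L x v)"
  shows "\<exists>vs. admissible M B T N Q vs \<and>
           cost M T N L \<Psi> x0 vs = (INF w\<in>{w. admissible M B T N Q w}. cost M T N L \<Psi> x0 w) \<and>
           ((\<exists>\<theta>>0. \<forall>x. convex_on UNIV (\<lambda>v. L x v - \<theta> / 2 * \<bar>v\<bar>\<^sup>2)) \<longrightarrow>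
              (\<forall>w. admissible M B T N Q w \<and> cost M T N L \<Psi> x0 w = cost M T N L \<Psi> x0 vs \<longrightarrow>
                 (\<forall>i<N. AE p in tP M T. w i (fst p) (snd p) = vs i (fst p) (snd p))))"
proof -
  have pM: "prob_space M" and T0: "0 < T" using BM unfolding brownian_motion_def by auto
  interpret setting M T by (rule setting.intro[OF pM]) (unfold_locales, rule T0)
  obtain \<beta>t Cl where bt: "0 < \<beta>t" and Lb: "\<And>x v. L x v \<le> \<beta>t * (1 + \<bar>v\<bar>\<^sup>2)"
    using L_growth by blast
  obtain C Ct where C0: "0 < C" and Pb: "\<And>x. \<Psi> x \<le> C * (1 + \<bar>x\<bar>\<^sup>2)"
    using Psi_growth by blast
  obtain \<alpha> \<beta> where a0: "0 < \<alpha>" and b0: "0 \<le> \<beta>" and co0: "\<And>x v. \<alpha> * \<bar>v\<bar>\<^sup>2 - \<beta> \<le> L x v"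
    using L_coercive by blast
  define l where "l v = L 0 v" for v
  have cx: "convex_on UNIV (\<lambda>x. L x v)" for v
  proof (rule convex_onI)
    fix t x y :: real assume t: "0 < t" "t < 1"
    have "L ((1-t)*x + t*y) ((1-t) * v + t * v) \<le> (1-t) * L x v + t * L y v"
      using convex_onD[OF L_convex, of t "(x,v)" "(y,v)"] t by simp
    moreover have "(1-t) * v + t * v = v" by (simp add: algebra_simps)
    ultimately show "L ((1 - t) *\<^sub>R x + t *\<^sub>R y) v \<le> (1 - t) * L x v + t * L y v" by simp
  qed simp
  have Lc: "L x v = l v" for x v
  proof -
    have "L x v \<le> L 0 v" by (rule convex_bdd_const[OF cx Lb])
    moreover have "L 0 v \<le> L x v" by (rule convex_bdd_const[OF cx Lb])
    ultimately show ?thesis unfolding l_def by simp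
  qed
  have costJ: "cost M T N L \<Psi> x0 = Jt M T N l \<Psi> x0"
    by (rule ext) (simp add: cost_eq[OF Lc] Jt_def)
  have cL: "continuous_on UNIV (\<lambda>q::real\<times>real. L (fst q) (snd q))"
  proof -
    have "isCont (\<lambda>q::real\<times>real. L (fst q) (snd q)) p" for p
      using has_derivative_continuous[OF L_deriv[of p]] .
    thus ?thesis by (simp add: continuous_at_imp_continuous_on)
  qed
  have lc: "continuous_on UNIV l"
    unfolding l_def using continuous_on_compose2[OF cL, of UNIV "\<lambda>v. (0::real, v)"]
    by (simp add: continuous_on_Pair continuous_on_const continuous_on_id)
  have Pc: "continuous_on UNIV \<Psi>"
  proof -
    have "isCont \<Psi> x" for x using DERIV_isCont[OF Psi_deriv[of x]] .
    thus ?thesis by (simp add: continuous_at_imp_continuous_on)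
  qed
  have l0: "0 \<le> l a" for a unfolding l_def by (rule L_nonneg)
  have lb: "l a \<le> \<beta>t * (1 + \<bar>a\<bar>\<^sup>2)" for a unfolding l_def by (rule Lb)
  have co: "\<alpha> * a\<^sup>2 - \<beta> \<le> l a" for a unfolding l_def using co0[of a 0] by simp
  have Pcv: "2 * \<Psi> (1/2*a + 1/2*c) \<le> \<Psi> a + \<Psi> c" for a c
    using convex_onD[OF Psi_convex, of "1/2" a c] by simp
  have lcv0: "2 * l (1/2*a + 1/2*c) + 0 * (a-c)\<^sup>2 \<le> l a + l c" for a c
    using convex_onD[OF L_convex, of "1/2" "(0,a)" "(0,c)"] unfolding l_def by simp
  have EX: "(INF w\<in>{w. admissible M B T N Q w}. Jt M T N l \<Psi> x0 w) < \<infinity>"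
    "\<exists>vs. admissible M B T N Q vs \<and> Jt M T N l \<Psi> x0 vs = (INF w\<in>{w. admissible M B T N Q w}. Jt M T N l \<Psi> x0 w)"
    using exist_min[OF N Q lc l0 lb _ co a0 b0 lcv0 Pc Psi_nonneg Pb _ Pcv] bt C0 by auto
  obtain vs where vsA: "admissible M B T N Q vs"
    and vsJ: "Jt M T N l \<Psi> x0 vs = (INF w\<in>{w. admissible M B T N Q w}. Jt M T N l \<Psi> x0 w)"
    using EX(2) by blast
  have uniq: "\<forall>i<N. AE p in tP M T. w i (fst p) (snd p) = vs i (fst p) (snd p)"
    if th: "\<exists>\<theta>>0. \<forall>x. convex_on UNIV (\<lambda>v. L x v - \<theta> / 2 * \<bar>v\<bar>\<^sup>2)"
      and wA: "admissible M B T N Q w" and wJ: "Jt M T N l \<Psi> x0 w = Jt M T N l \<Psi> x0 vs" for w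
  proof -
    obtain \<theta> where th0: "0 < \<theta>" and thc: "convex_on UNIV (\<lambda>v. L 0 v - \<theta> / 2 * \<bar>v\<bar>\<^sup>2)"
      using th by blast
    have lcv: "2 * l (1/2*a + 1/2*c) + \<theta>/4 * (a-c)\<^sup>2 \<le> l a + l c" for a c
    proof -
      define mm where "mm = 1/2*a + 1/2*c"
      have h: "l mm - \<theta>/2 * mm\<^sup>2 \<le> 1/2 * (l a - \<theta>/2 * a\<^sup>2) + 1/2 * (l c - \<theta>/2 * c\<^sup>2)"
        using convex_onD[OF thc, of "1/2" a c] unfolding l_def mm_def by simp
      have e: "\<theta>/4 * (a-c)\<^sup>2 = \<theta>/2 * a\<^sup>2 + \<theta>/2 * c\<^sup>2 - 2 * (\<theta>/2 * mm\<^sup>2)"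
        unfolding mm_def by (simp add: power2_eq_square algebra_simps)
      have g: "2*p + (s' + t' - 2*u') \<le> q + r" if "p - u' \<le> 1/2*(q - s') + 1/2*(r - t')" for p q r s' t' u' :: real
        using that by argo
      have "2 * l mm + \<theta>/4 * (a-c)\<^sup>2 \<le> l a + l c" unfolding e by (rule g[OF h])
      thus ?thesis unfolding mm_def .
    qed
    show ?thesis
      by (rule unique_min[OF N lc l0 Pc Psi_nonneg Pcv lcv _ vsA wA vsJ wJ EX(1)]) (use th0 in simp)
  qed
  show ?thesis unfolding costJ using vsA vsJ uniq by blast
qed

end
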